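(* Let $(b,c)$ be a locally finite connected graph over a countable set $X$ with a nilpotent cocompact group action of $G$ such that $H_{b,c}$ is $G$-invariant. Then there exists a normal subgroup $R\subseteq G$ such that every $f\in\mathcal{H}^+_\mathbb{R}$ is $R$-invariant, $G/R\cong\mathbb{Z}^d$ for some $d\in\mathbb{N}_0$, and $R$ contains the stabiliser $\mathrm{Stab}(x)=\{g\in G:gx=x\}$ of every $x\in X$.
   Context: A graph over $X$ is $(b,c)$ with $b:X\times X\to[0,\infty)$, $c:X\to\mathbb{R}$, $\sum_yb(x,y)<\infty$ ($b$ need not be symmetric); locally finite: each $x$ has finitely many $y$ with $b(x,y)>0$; connected: any two points are joined by a finite sequence $y_1,\dots,y_n$ with $b(y_i,y_{i+1})>0$. $H_{b,c}f(x)=\sum_yb(x,y)(f(x)-f(y))+c(x)f(x)$ on $\mathrm{Dom}(H)=\{f:\sum_yb(x,y)|f(y)|<\infty\ \forall x\}$. $\mathcal{H}^+_\mathbb{R}$ is the set of all nonnegative, not identically zero $f\in\mathrm{Dom}(H)$ with $(H-\lambda)f=0$ for some $\lambda\in\mathbb{R}$. $T_gf(x)=f(g^{-1}x)$; cocompact: $GV=X$ for some finite $V$; $H$ is $G$-invariant if $T_g$ preserves $\mathrm{Dom}(H)$ and $HT_g=T_gH$; $f$ is $R$-invariant if $T_rf=f$ for all $r\in R$. *)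

theory Defs
  imports "HOL-Analysis.Analysis" "HOL-Algebra.Free_Abelian_Groups" "HOL-Algebra.Group_Action"
begin

primrec lower_central :: "('g, 'm) monoid_scheme \<Rightarrow> nat \<Rightarrow> 'g set" where
  "lower_central G 0 = carrier G"
| "lower_central G (Suc n) =
     generate G {x \<otimes>\<^bsub>G\<^esub> y \<otimes>\<^bsub>G\<^esub> inv\<^bsub>G\<^esub> x \<otimes>\<^bsub>G\<^esub> inv\<^bsub>G\<^esub> y | x y.
                   x \<in> carrier G \<and> y \<in> lower_central G n}"

definition nilpotent_group :: "('g, 'm) monoid_scheme \<Rightarrow> bool" where
  "nilpotent_group G \<longleftrightarrow> group G \<and> (\<exists>n. lower_central G n = {\<one>\<^bsub>G\<^esub>})"

definition graph :: "('x \<Rightarrow> 'x \<Rightarrow> real) \<Rightarrow> ('x \<Rightarrow> real) \<Rightarrow> bool" where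
  "graph b c \<longleftrightarrow> (\<forall>x y. 0 \<le> b x y) \<and> (\<forall>x. (\<lambda>y. b x y) summable_on UNIV)"

definition locally_finite :: "('x \<Rightarrow> 'x \<Rightarrow> real) \<Rightarrow> bool" where
  "locally_finite b \<longleftrightarrow> (\<forall>x. finite {y. b x y > 0})"

definition graph_connected :: "('x \<Rightarrow> 'x \<Rightarrow> real) \<Rightarrow> bool" where
  "graph_connected b \<longleftrightarrow> (\<forall>x y. (\<lambda>u v. b u v > 0)\<^sup>*\<^sup>* x y)"

definition dom_H :: "('x \<Rightarrow> 'x \<Rightarrow> real) \<Rightarrow> ('x \<Rightarrow> real) set" where
  "dom_H b = {f. \<forall>x. (\<lambda>y. b x y * \<bar>f y\<bar>) summable_on UNIV}"

definition H_op :: "('x \<Rightarrow> 'x \<Rightarrow> real) \<Rightarrow> ('x \<Rightarrow> real) \<Rightarrow> ('x \<Rightarrow> real) \<Rightarrow> 'x \<Rightarrow> real" where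
  "H_op b c f x = (\<Sum>\<^sub>\<infinity>y. b x y * (f x - f y)) + c x * f x"

definition pos_eigenfunctions :: "('x \<Rightarrow> 'x \<Rightarrow> real) \<Rightarrow> ('x \<Rightarrow> real) \<Rightarrow> ('x \<Rightarrow> real) set" where
  "pos_eigenfunctions b c =
     {f \<in> dom_H b. (\<forall>x. 0 \<le> f x) \<and> f \<noteq> (\<lambda>_. 0) \<and> (\<exists>lam::real. \<forall>x. H_op b c f x - lam * f x = 0)}"

definition transl :: "('g, 'm) monoid_scheme \<Rightarrow> ('g \<Rightarrow> 'x \<Rightarrow> 'x) \<Rightarrow> 'g \<Rightarrow> ('x \<Rightarrow> real) \<Rightarrow> 'x \<Rightarrow> real" where
  "transl G \<phi> g f x = f (\<phi> (inv\<^bsub>G\<^esub> g) x)"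

definition cocompact :: "('g, 'm) monoid_scheme \<Rightarrow> ('g \<Rightarrow> 'x \<Rightarrow> 'x) \<Rightarrow> bool" where
  "cocompact G \<phi> \<longleftrightarrow> (\<exists>V. finite V \<and> (\<Union>g\<in>carrier G. \<phi> g ` V) = UNIV)"

definition G_invariant :: "('g, 'm) monoid_scheme \<Rightarrow> ('g \<Rightarrow> 'x \<Rightarrow> 'x) \<Rightarrow> ('x \<Rightarrow> 'x \<Rightarrow> real) \<Rightarrow> ('x \<Rightarrow> real) \<Rightarrow> bool" where
  "G_invariant G \<phi> b c \<longleftrightarrow>
     (\<forall>g\<in>carrier G. \<forall>f\<in>dom_H b. transl G \<phi> g f \<in> dom_H b \<and>
        H_op b c (transl G \<phi> g f) = transl G \<phi> g (H_op b c f))"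

definition R_invariant :: "('g, 'm) monoid_scheme \<Rightarrow> ('g \<Rightarrow> 'x \<Rightarrow> 'x) \<Rightarrow> 'g set \<Rightarrow> ('x \<Rightarrow> real) \<Rightarrow> bool" where
  "R_invariant G \<phi> R f \<longleftrightarrow> (\<forall>r\<in>R. transl G \<phi> r f = f)"

end

theory Submission
  imports Defs "HOL-Library.Diagonal_Subsequence"
begin

context comm_group begin

lemma gen_eq_carrier:
  assumes "S' \<subseteq> carrier G" "S \<subseteq> generate G S'" "generate G S = carrier G"
  shows "generate G S' = carrier G"
proof -
  have "generate G S \<subseteq> generate G S'"
    using generate_subgroup_incl[OF assms(2) generate_is_subgroup[OF assms(1)]] .
  then show ?thesis using generate_incl[OF assms(1)] assms(3) by blast
qed

lemma cancel4:
  assumes "X \<in> carrier G" "Y \<in> carrier G" "Z \<in> carrier G" "W \<in> carrier G"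
  shows "X \<otimes> Y \<otimes> (Z \<otimes> inv Y \<otimes> W) = X \<otimes> (Z \<otimes> W)"
proof -
  have "X \<otimes> Y \<otimes> (Z \<otimes> inv Y \<otimes> W) = X \<otimes> (Z \<otimes> W) \<otimes> (Y \<otimes> inv Y)"
    using assms by (simp add: m_ac)
  then show ?thesis using assms by simp
qed

lemma torsion_int:
  assumes tf: "\<forall>x\<in>carrier G. \<forall>n::nat. n > 0 \<longrightarrow> x [^] n = \<one> \<longrightarrow> x = \<one>"
    and a: "a \<in> carrier G" and k: "k \<noteq> 0" and e: "a [^] (k::int) = \<one>"
  shows "a = \<one>"
proof (cases "k > 0")
  case True
  then have "a [^] (nat k) = \<one>" using e int_pow_int[of G a "nat k"] by simp
  then show ?thesis using tf a True by (metis zero_less_nat_eq)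
next
  case False
  obtain m :: nat where m: "k = - int m" using False by (metis minus_minus nat_0_le neg_0_le_iff_le not_less)
  have "a [^] (- int m) = inv (a [^] m)" by (rule int_pow_neg_int[OF a])
  then have "inv (a [^] m) = \<one>" using e m by simp
  then have "a [^] m = \<one>" using a by (metis inv_inv inv_one nat_pow_closed)
  moreover have "m > 0" using m k by auto
  ultimately show ?thesis using tf a by auto
qed

lemma reduce_relation:
  assumes tf: "\<forall>x\<in>carrier G. \<forall>n::nat. n > 0 \<longrightarrow> x [^] n = \<one> \<longrightarrow> x = \<one>"
  shows "finite S \<Longrightarrow> S \<subseteq> carrier G \<Longrightarrow> generate G S = carrier G \<Longrightarrow> a0 \<in> S \<Longrightarrow> n a0 \<noteq> 0
    \<Longrightarrow> finprod G (\<lambda>a. a [^] (n a :: int)) S = \<one>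
    \<Longrightarrow> \<exists>S'. finite S' \<and> S' \<subseteq> carrier G \<and> card S' < card S \<and> generate G S' = carrier G"
proof (induction "\<Sum>a\<in>S. nat \<bar>n a\<bar>" arbitrary: S n a0 rule: less_induct)
  case less
  note fin = less.prems(1) and sub = less.prems(2) and gen = less.prems(3)
    and a0 = less.prems(4) and na0 = less.prems(5) and rel = less.prems(6)
  have fc: "(\<lambda>a. a [^] (m a :: int)) \<in> A \<rightarrow> carrier G" if "A \<subseteq> carrier G" for A m
    using that by auto
  show ?case
  proof (cases "\<one> \<in> S")
    case True
    have "S \<subseteq> generate G (S - {\<one>})"
      using generate.incl[of _ "S - {\<one>}" G] generate.one[of G "S - {\<one>}"] by blast
    then have "generate G (S - {\<one>}) = carrier G"
      using gen_eq_carrier[of "S - {\<one>}" S] sub gen by blast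
    moreover have "card (S - {\<one>}) < card S" using True fin by (meson card_Diff1_less)
    ultimately show ?thesis using fin sub by (intro exI[of _ "S - {\<one>}"]) auto
  next
    case one_notin: False
    show ?thesis
    proof (cases "\<exists>b\<in>S. b \<noteq> a0 \<and> n b \<noteq> 0")
      case False
      then have "finprod G (\<lambda>a. a [^] n a) S = finprod G (\<lambda>a. a [^] n a) (insert a0 (S - {a0}))"
        using a0 by (simp add: insert_absorb)
      also have "\<dots> = a0 [^] n a0 \<otimes> finprod G (\<lambda>a. a [^] n a) (S - {a0})"
        using fin sub a0 by (intro finprod_insert) auto
      also have "finprod G (\<lambda>a. a [^] n a) (S - {a0}) = \<one>"
        using False by (intro finprod_one_eqI) auto
      finally have "a0 [^] n a0 = \<one>" using rel a0 sub by auto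
      then have "a0 = \<one>" using torsion_int[OF tf _ na0] a0 sub by auto
      then show ?thesis using one_notin a0 by blast
    next
      case True
      then obtain b0 where b0: "b0 \<in> S" "b0 \<noteq> a0" "n b0 \<noteq> 0" by blast
      define a where "a = (if \<bar>n a0\<bar> \<ge> \<bar>n b0\<bar> then a0 else b0)"
      define b where "b = (if \<bar>n a0\<bar> \<ge> \<bar>n b0\<bar> then b0 else a0)"
      have ab: "a \<in> S" "b \<in> S" "a \<noteq> b" "n a \<noteq> 0" "n b \<noteq> 0" "\<bar>n b\<bar> \<le> \<bar>n a\<bar>"
        using b0 a0 na0 by (auto simp: a_def b_def)
      define s :: int where "s = (if (n a > 0) = (n b > 0) then 1 else -1)"
      have abs_dec: "\<bar>n a - s * n b\<bar> = \<bar>n a\<bar> - \<bar>n b\<bar>"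
        using ab by (auto simp: s_def abs_if)
      have aC: "a \<in> carrier G" and bC: "b \<in> carrier G" using ab sub by auto
      define b' where "b' = b \<otimes> a [^] s"
      have b'C: "b' \<in> carrier G" using aC bC by (simp add: b'_def)
      have b_from: "b = b' \<otimes> a [^] (- s)"
        using aC bC by (simp add: b'_def m_assoc int_pow_neg[OF aC])
      show ?thesis
      proof (cases "b' \<in> S - {b}")
        case True
        have "b \<in> generate G (S - {b})"
        proof -
          have "b' \<in> generate G (S - {b})" using True by (rule generate.incl)
          moreover have "a \<in> generate G (S - {b})" using ab by (intro generate.incl) auto
          moreover have "subgroup (generate G (S - {b})) G" using sub by (intro generate_is_subgroup) auto
          ultimately show ?thesis unfolding b_from
            by (meson subgroup_int_pow_closed subgroup.m_closed)
        qed
        then have "S \<subseteq> generate G (S - {b})" using generate.incl[of _ "S - {b}" G] by blast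
        then have "generate G (S - {b}) = carrier G" using gen_eq_carrier[of "S - {b}" S] sub gen by blast
        moreover have "card (S - {b}) < card S" using ab fin by (meson card_Diff1_less)
        ultimately show ?thesis using fin sub by (intro exI[of _ "S - {b}"]) auto
      next
        case False
        have b'S: "b' \<notin> S"
        proof
          assume "b' \<in> S"
          then have "b' = b" using False by auto
          then have "a [^] s = \<one>" using aC bC unfolding b'_def
            by (metis int_pow_closed l_cancel_one')
          moreover have "s \<noteq> 0" by (simp add: s_def)
          ultimately have "a = \<one>" using torsion_int[OF tf aC] by blast
          then show False using one_notin ab by auto
        qed
        define S2 where "S2 = insert b' (S - {b})"
        define n2 where "n2 = (n(a := n a - s * n b))(b' := n b)"
        have fin2: "finite S2" using fin by (simp add: S2_def)
        have sub2: "S2 \<subseteq> carrier G" using sub b'C by (auto simp: S2_def)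
        have card2: "card S2 = card S" using fin b'S ab by (simp add: S2_def card_insert_if card_Diff1_less)
          (metis Suc_pred card_Diff1_less card_gt_0_iff emptyE)
        have gen2: "generate G S2 = carrier G"
        proof -
          have "b \<in> generate G S2"
          proof -
            have "b' \<in> generate G S2" by (intro generate.incl) (simp add: S2_def)
            moreover have "a \<in> generate G S2" using ab by (intro generate.incl) (auto simp: S2_def)
            moreover have "subgroup (generate G S2) G" using sub2 by (intro generate_is_subgroup)
            ultimately show ?thesis unfolding b_from
              by (meson subgroup_int_pow_closed subgroup.m_closed)
          qed
          then have "S \<subseteq> generate G S2" using generate.incl[of _ S2 G] by (auto simp: S2_def)
          then show ?thesis using gen_eq_carrier[of S2 S] sub2 gen by blast
        qed
        define T where "T = S - {a, b}"
        have finT: "finite T" "T \<subseteq> carrier G" using fin sub by (auto simp: T_def)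
        have S_eq: "S = insert b (insert a T)" using ab by (auto simp: T_def)
        have S2_eq: "S2 = insert b' (insert a T)" using ab by (auto simp: S2_def T_def)
        have aT: "a \<notin> T" "b \<notin> T" "b' \<notin> T" "b' \<noteq> a" using b'S ab by (auto simp: T_def)
        have agree: "\<And>x. x \<in> T \<Longrightarrow> n2 x = n x" using aT by (auto simp: n2_def)
        have rel2: "finprod G (\<lambda>x. x [^] n2 x) S2 = \<one>"
        proof -
          have P: "finprod G (\<lambda>x. x [^] n2 x) T = finprod G (\<lambda>x. x [^] n x) T"
            using agree finT by (intro finprod_cong') auto
          have "finprod G (\<lambda>x. x [^] n2 x) S2 = b' [^] n b \<otimes> (a [^] (n a - s * n b) \<otimes> finprod G (\<lambda>x. x [^] n x) T)"
            unfolding S2_eq using finT aT aC b'C P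
            by (subst finprod_insert; auto simp: n2_def)+
          also have "\<dots> = b [^] n b \<otimes> (a [^] n a \<otimes> finprod G (\<lambda>x. x [^] n x) T)"
          proof -
            have "b' [^] n b = b [^] n b \<otimes> a [^] (s * n b)"
              using aC bC by (simp add: b'_def int_pow_distrib int_pow_pow)
            moreover have "a [^] (n a - s * n b) = a [^] n a \<otimes> inv (a [^] (s * n b))"
              using aC by (simp add: int_pow_diff)
            moreover have "finprod G (\<lambda>x. x [^] n x) T \<in> carrier G"
              using finT by (intro finprod_closed) auto
            ultimately show ?thesis using aC bC
              by (simp only: cancel4 int_pow_closed)
          qed
          also have "\<dots> = finprod G (\<lambda>x. x [^] n x) S"
            unfolding S_eq using finT aT aC bC ab
            by (subst finprod_insert; auto)+
          finally show ?thesis using rel by simp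
        qed
        have meas: "(\<Sum>x\<in>S2. nat \<bar>n2 x\<bar>) < (\<Sum>x\<in>S. nat \<bar>n x\<bar>)"
        proof -
          have s1: "(\<Sum>x\<in>T. nat \<bar>n2 x\<bar>) = (\<Sum>x\<in>T. nat \<bar>n x\<bar>)" using agree by simp
          have "(\<Sum>x\<in>S2. nat \<bar>n2 x\<bar>) = nat \<bar>n b\<bar> + (nat \<bar>n a - s * n b\<bar> + (\<Sum>x\<in>T. nat \<bar>n x\<bar>))"
            unfolding S2_eq using finT aT s1 by (simp add: n2_def)
          moreover have "(\<Sum>x\<in>S. nat \<bar>n x\<bar>) = nat \<bar>n b\<bar> + (nat \<bar>n a\<bar> + (\<Sum>x\<in>T. nat \<bar>n x\<bar>))"
            unfolding S_eq using finT aT ab by simp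
          ultimately show ?thesis using abs_dec ab by simp
        qed
        have "n2 b' \<noteq> 0" using ab by (simp add: n2_def)
        from less.hyps[OF meas fin2 sub2 gen2 _ this rel2]
        show ?thesis using card2 by (simp add: S2_def)
      qed
    qed
  qed
qed

lemma finprod_indicator:
  assumes "finite S" "S \<subseteq> carrier G" "a \<in> S"
  shows "finprod G (\<lambda>b. b [^] (if b = a then 1 else 0 :: int)) S = a"
proof -
  have "finprod G (\<lambda>b. b [^] (if b = a then 1 else 0 :: int)) (insert a (S - {a}))
      = a [^] (1::int) \<otimes> finprod G (\<lambda>b. b [^] (if b = a then 1 else 0 :: int)) (S - {a})"
    using assms by (subst finprod_insert) auto
  also have "finprod G (\<lambda>b. b [^] (if b = a then 1 else 0 :: int)) (S - {a}) = \<one>"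
    by (intro finprod_one_eqI) auto
  finally show ?thesis using assms by (simp add: insert_absorb subsetD)
qed

lemma free_iso_if_no_relation:
  assumes fin: "finite S" and sub: "S \<subseteq> carrier G" and gen: "generate G S = carrier G"
    and norel: "\<And>n. finprod G (\<lambda>a. a [^] (n a :: int)) S = \<one> \<Longrightarrow> \<forall>a\<in>S. n a = 0"
  shows "G \<cong> free_Abelian_group S"
proof -
  define h where "h x = finprod G (\<lambda>a. a [^] poly_mapping.lookup x a) S" for x :: "'a \<Rightarrow>\<^sub>0 int"
  have hom: "h \<in> hom (free_Abelian_group S) G"
  proof (rule homI)
    fix x y assume "x \<in> carrier (free_Abelian_group S)" "y \<in> carrier (free_Abelian_group S)"
    show "h (x \<otimes>\<^bsub>free_Abelian_group S\<^esub> y) = h x \<otimes> h y"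
    proof -
      have "h (x + y) = finprod G (\<lambda>a. a [^] poly_mapping.lookup x a \<otimes> a [^] poly_mapping.lookup y a) S"
        unfolding h_def using sub
        by (intro finprod_cong') (auto simp: Poly_Mapping.lookup_add int_pow_mult subsetD)
      also have "\<dots> = h x \<otimes> h y"
        unfolding h_def using sub by (intro finprod_multf) auto
      finally show ?thesis by simp
    qed
  next
    fix x show "x \<in> carrier (free_Abelian_group S) \<Longrightarrow> h x \<in> carrier G"
      using sub unfolding h_def by (intro finprod_closed) auto
  qed
  then interpret gh: group_hom "free_Abelian_group S" G h
    by (simp add: group_hom_axioms_def group_hom_def is_group)
  have ker: "kernel (free_Abelian_group S) G h = {\<one>\<^bsub>free_Abelian_group S\<^esub>}"
  proof
    show "kernel (free_Abelian_group S) G h \<subseteq> {\<one>\<^bsub>free_Abelian_group S\<^esub>}"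
    proof
      fix x assume "x \<in> kernel (free_Abelian_group S) G h"
      then have kx: "Poly_Mapping.keys x \<subseteq> S" and hx: "h x = \<one>" by (auto simp: kernel_def)
      have "\<forall>a\<in>S. poly_mapping.lookup x a = 0" using norel[of "poly_mapping.lookup x"] hx by (simp add: h_def)
      then have "Poly_Mapping.keys x = {}" using kx by (metis in_keys_iff subset_empty subset_iff)
      then have "x = 0" by simp
      then show "x \<in> {\<one>\<^bsub>free_Abelian_group S\<^esub>}" by simp
    qed
  next
    show "{\<one>\<^bsub>free_Abelian_group S\<^esub>} \<subseteq> kernel (free_Abelian_group S) G h"
      using gh.hom_one by (auto simp: kernel_def)
  qed
  have surj: "h ` carrier (free_Abelian_group S) = carrier G"
  proof
    show "h ` carrier (free_Abelian_group S) \<subseteq> carrier G" using hom by (auto simp: hom_def)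
    have "S \<subseteq> h ` carrier (free_Abelian_group S)"
    proof
      fix a assume a: "a \<in> S"
      define x :: "'a \<Rightarrow>\<^sub>0 int" where "x = Abs_poly_mapping (\<lambda>b. if b = a then 1 else 0)"
      have lx: "poly_mapping.lookup x = (\<lambda>b. if b = a then 1 else 0)"
        unfolding x_def by (rule lookup_Abs_poly_mapping) simp
      have "Poly_Mapping.keys x \<subseteq> S" using a by (auto simp: in_keys_iff lx split: if_splits)
      moreover have "h x = a" unfolding h_def lx using finprod_indicator[OF fin sub a] .
      ultimately show "a \<in> h ` carrier (free_Abelian_group S)" by force
    qed
    then have "generate G S \<subseteq> h ` carrier (free_Abelian_group S)"
      by (intro generate_subgroup_incl gh.img_is_subgroup)
    then show "carrier G \<subseteq> h ` carrier (free_Abelian_group S)" using gen by simp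
  qed
  have "h \<in> iso (free_Abelian_group S) G"
    using iso_kernel_image[OF group_free_Abelian_group is_group, of h S] hom ker surj by blast
  then have "free_Abelian_group S \<cong> G" by (auto simp: is_iso_def)
  then show ?thesis by (rule group.iso_sym[OF group_free_Abelian_group])
qed

lemma fg_torsion_free_free:
  assumes tf: "\<forall>x\<in>carrier G. \<forall>n::nat. n > 0 \<longrightarrow> x [^] n = \<one> \<longrightarrow> x = \<one>"
  shows "finite S \<Longrightarrow> S \<subseteq> carrier G \<Longrightarrow> generate G S = carrier G
     \<Longrightarrow> \<exists>d::nat. G \<cong> free_Abelian_group {..<d}"
proof (induction "card S" arbitrary: S rule: less_induct)
  case less
  show ?case
  proof (cases "\<exists>n a0. a0 \<in> S \<and> n a0 \<noteq> 0 \<and> finprod G (\<lambda>a. a [^] (n a :: int)) S = \<one>")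
    case True
    then obtain n a0 where "a0 \<in> S" "n a0 \<noteq> 0" "finprod G (\<lambda>a. a [^] (n a :: int)) S = \<one>" by blast
    from reduce_relation[OF tf less.prems this] obtain S' where
      "finite S'" "S' \<subseteq> carrier G" "card S' < card S" "generate G S' = carrier G" by blast
    then show ?thesis using less.hyps by blast
  next
    case False
    have nr: "\<And>n. finprod G (\<lambda>a. a [^] (n a :: int)) S = \<one> \<Longrightarrow> \<forall>a\<in>S. n a = 0"
      using False by blast
    have "G \<cong> free_Abelian_group S" by (rule free_iso_if_no_relation[OF less.prems nr])
    moreover obtain f where "bij_betw f S {0..<card S}" using ex_bij_betw_finite_nat[OF less.prems(1)] by blast
    then have "S \<approx> {..<card S}" by (auto simp: eqpoll_def lessThan_atLeast0)
    then have "free_Abelian_group S \<cong> free_Abelian_group {..<card S}"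
      by (simp add: isomorphic_free_Abelian_groups)
    ultimately have "G \<cong> free_Abelian_group {..<card S}" by (rule iso_trans)
    then show ?thesis by blast
  qed
qed

end

lemma diag_conv:
  fixes k :: "nat \<Rightarrow> 'x \<Rightarrow> real"
  assumes cnt: "countable (UNIV :: 'x set)" and bd: "\<And>n p. \<bar>k n p\<bar> \<le> B p"
  shows "\<exists>s kinf. strict_mono s \<and> (\<forall>p. (\<lambda>n. k (s n) p) \<longlonglongrightarrow> kinf p)"
proof -
  define e where "e = from_nat_into (UNIV :: 'x set)"
  have e_surj: "\<exists>n. e n = p" for p using from_nat_into_surj[OF cnt, of p] by (simp add: e_def)
  define P where "P n s \<longleftrightarrow> convergent (\<lambda>m. k (s m) (e n))" for n and s :: "nat \<Rightarrow> nat"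
  interpret subseqs P
  proof
    fix n and s :: "nat \<Rightarrow> nat" assume "strict_mono s"
    have "bounded (range (\<lambda>m. k (s m) (e n)))"
      using bd by (intro boundedI[of _ "B (e n)"]) auto
    then obtain l r where "strict_mono r" "((\<lambda>m. k (s m) (e n)) \<circ> r) \<longlonglongrightarrow> l"
      using bounded_imp_convergent_subsequence by blast
    then show "\<exists>r'. strict_mono r' \<and> P n (s \<circ> r')"
      by (intro exI[of _ r]) (auto simp: P_def convergent_def o_def)
  qed
  have stab: "P n (s \<circ> r)" if "strict_mono r" "P n s" for r s n
  proof -
    have "convergent ((\<lambda>m. k (s m) (e n)) \<circ> r)"
      using that by (intro convergent_subseq_convergent) (auto simp: P_def)
    then show ?thesis by (simp add: P_def o_def)
  qed
  have conv: "convergent (\<lambda>m. k (diagseq m) (e n))" for n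
  proof -
    have "P n (diagseq \<circ> ((+) (Suc n)))" by (rule diagseq_holds[OF stab])
    then obtain l where "(\<lambda>m. k (diagseq (m + Suc n)) (e n)) \<longlonglongrightarrow> l"
      by (auto simp: P_def convergent_def o_def add.commute)
    then have "(\<lambda>m. k (diagseq m) (e n)) \<longlonglongrightarrow> l" by (rule LIMSEQ_offset)
    then show ?thesis by (auto simp: convergent_def)
  qed
  have "\<forall>p. (\<lambda>n. k (diagseq n) p) \<longlonglongrightarrow> lim (\<lambda>n. k (diagseq n) p)"
  proof
    fix p obtain n where "e n = p" using e_surj by blast
    then show "(\<lambda>n. k (diagseq n) p) \<longlonglongrightarrow> lim (\<lambda>n. k (diagseq n) p)"
      using conv[of n] by (simp add: convergent_LIMSEQ_iff)
  qed
  then show ?thesis using subseq_diagseq by (intro exI[of _ diagseq] exI[of _ "\<lambda>p. lim (\<lambda>n. k (diagseq n) p)"]) simp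
qed


context group begin

lemma cancel_l [simp]: "X \<in> carrier G \<Longrightarrow> r \<in> carrier G \<Longrightarrow> inv X \<otimes> (X \<otimes> r) = r"
  by (simp add: m_assoc[symmetric])

lemma cancel_r [simp]: "X \<in> carrier G \<Longrightarrow> r \<in> carrier G \<Longrightarrow> X \<otimes> (inv X \<otimes> r) = r"
  by (simp add: m_assoc[symmetric])

lemma conj_pow:
  assumes X: "X \<in> carrier G" and Z: "Z \<in> carrier G"
  shows "X \<otimes> Z [^] (m::nat) \<otimes> inv X = (X \<otimes> Z \<otimes> inv X) [^] m"
proof (induction m)
  case 0
  then show ?case using X by simp
next
  case (Suc m)
  have "X \<otimes> Z [^] Suc m \<otimes> inv X = (X \<otimes> Z [^] m \<otimes> inv X) \<otimes> (X \<otimes> Z \<otimes> inv X)"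
    using X Z by (simp add: m_assoc nat_pow_Suc)
  also have "\<dots> = (X \<otimes> Z \<otimes> inv X) [^] m \<otimes> (X \<otimes> Z \<otimes> inv X)" using Suc by simp
  finally show ?case by (simp add: nat_pow_Suc)
qed

lemma comm_pow_sq:
  assumes X: "X \<in> carrier G" and Y: "Y \<in> carrier G"
    and W: "W = X \<otimes> Y \<otimes> inv X \<otimes> inv Y"
    and WX: "W \<otimes> X = X \<otimes> W" and WY: "W \<otimes> Y = Y \<otimes> W"
  shows "X [^] n \<otimes> Y [^] n \<otimes> inv (X [^] n) \<otimes> inv (Y [^] n) = W [^] ((n::nat) * n)"
proof -
  have WC: "W \<in> carrier G" using W X Y by simp
  have a: "X \<otimes> Y \<otimes> inv X = W \<otimes> Y" using X Y unfolding W by (simp add: m_assoc)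
  have b: "X \<otimes> Y [^] m \<otimes> inv X = W [^] m \<otimes> Y [^] m" for m :: nat
    using conj_pow[OF X Y, of m] a pow_mult_distrib[OF WY WC Y] by simp
  have WXk: "W \<otimes> X [^] k = X [^] k \<otimes> W" for k :: nat
    using group_commutes_pow[OF WX[symmetric] X WC] by simp
  have c: "X [^] k \<otimes> Y [^] m \<otimes> inv (X [^] k) = W [^] (k * m) \<otimes> Y [^] m" for k m :: nat
  proof (induction k)
    case 0
    then show ?case using Y by simp
  next
    case (Suc k)
    have "X [^] Suc k \<otimes> Y [^] m \<otimes> inv (X [^] Suc k) = X [^] k \<otimes> (X \<otimes> Y [^] m \<otimes> inv X) \<otimes> inv (X [^] k)"
      using X Y by (simp add: nat_pow_Suc inv_mult_group m_assoc)
    also have "\<dots> = X [^] k \<otimes> (W [^] m \<otimes> Y [^] m) \<otimes> inv (X [^] k)" using b by simp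
    also have "\<dots> = W [^] m \<otimes> (X [^] k \<otimes> Y [^] m \<otimes> inv (X [^] k))"
    proof -
      have "X [^] k \<otimes> W [^] m = W [^] m \<otimes> X [^] k"
        using group_commutes_pow[OF WXk WC nat_pow_closed[OF X], of m] by simp
      then show ?thesis using X Y WC by (simp add: m_assoc[symmetric])
    qed
    also have "\<dots> = W [^] m \<otimes> (W [^] (k * m) \<otimes> Y [^] m)" using Suc by simp
    also have "\<dots> = W [^] (Suc k * m) \<otimes> Y [^] m"
      using WC Y by (simp add: m_assoc[symmetric] nat_pow_mult add.commute)
    finally show ?case .
  qed
  have "X [^] n \<otimes> Y [^] n \<otimes> inv (X [^] n) \<otimes> inv (Y [^] n) = W [^] (n * n) \<otimes> Y [^] n \<otimes> inv (Y [^] n)"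
    using c[of n n] by simp
  also have "\<dots> = W [^] (n * n)" using WC Y by (simp add: m_assoc)
  finally show ?thesis .
qed

end

locale gsetting =
  fixes G :: "'g monoid" and \<phi> :: "'g \<Rightarrow> 'x \<Rightarrow> 'x"
    and b :: "'x \<Rightarrow> 'x \<Rightarrow> real" and c :: "'x \<Rightarrow> real"
  assumes act: "group_action G UNIV \<phi>" and lf: "locally_finite b"
    and bnn: "\<And>x y. 0 \<le> b x y" and conn: "graph_connected b"
    and cc: "cocompact G \<phi>" and ginv: "G_invariant G \<phi> b c"
    and cnt: "countable (UNIV :: 'x set)"
begin

lemma grp: "group G" using act by (simp add: group_action_def group_hom_def)

definition nb :: "'x \<Rightarrow> 'x set" where "nb x = {y. b x y > 0}"
definition deg :: "'x \<Rightarrow> real" where "deg x = sum (b x) (nb x)"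
definition eqn :: "real \<Rightarrow> ('x \<Rightarrow> real) \<Rightarrow> bool" where
  "eqn lam u \<longleftrightarrow> (\<forall>x. (\<Sum>y\<in>nb x. b x y * u y) = (deg x + c x - lam) * u x)"
definition Pl :: "real \<Rightarrow> ('x \<Rightarrow> real) set" where
  "Pl lam = {u. (\<forall>x. 0 \<le> u x) \<and> u \<noteq> (\<lambda>_. 0) \<and> eqn lam u}"

abbreviation T :: "'g \<Rightarrow> ('x \<Rightarrow> real) \<Rightarrow> 'x \<Rightarrow> real" where "T \<equiv> transl G \<phi>"

lemma fin_nb: "finite (nb x)" using lf by (simp add: locally_finite_def nb_def)

lemma b_out: "y \<notin> nb x \<Longrightarrow> b x y = 0" using bnn[of x y] by (simp add: nb_def)

lemma infsum_b: "(\<Sum>\<^sub>\<infinity>y. b x y * F y) = (\<Sum>y\<in>nb x. b x y * F y)"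
proof -
  have "(\<Sum>\<^sub>\<infinity>y. b x y * F y) = (\<Sum>\<^sub>\<infinity>y\<in>nb x. b x y * F y)"
    by (rule infsum_cong_neutral) (auto simp: b_out)
  then show ?thesis using fin_nb by simp
qed

lemma summable_b: "(\<lambda>y. b x y * F y) summable_on UNIV"
proof -
  have "(\<lambda>y. b x y * F y) summable_on nb x" using fin_nb by simp
  then show ?thesis
    by (rule summable_on_cong_neutral[THEN iffD1, rotated -1]) (auto simp: b_out)
qed

lemma dom_all: "dom_H b = UNIV"
  unfolding dom_H_def using summable_b by auto

lemma H_eq: "H_op b c f x = deg x * f x - (\<Sum>y\<in>nb x. b x y * f y) + c x * f x"
  unfolding H_op_def infsum_b deg_def
  by (simp add: right_diff_distrib sum_subtractf sum_distrib_right)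

lemma eqn_iff: "eqn lam u \<longleftrightarrow> (\<forall>x. H_op b c u x - lam * u x = 0)"
  unfolding eqn_def H_eq by (auto simp: algebra_simps)

lemma pos_eig: "f \<in> pos_eigenfunctions b c \<longleftrightarrow> (\<exists>lam. f \<in> Pl lam)"
  unfolding pos_eigenfunctions_def Pl_def dom_all eqn_iff by auto

lemma phi_one: "\<phi> \<one>\<^bsub>G\<^esub> x = x"
  using group_action.id_eq_one[OF act] by (metis UNIV_I restrict_apply')

lemma phi_mult: "g \<in> carrier G \<Longrightarrow> h \<in> carrier G \<Longrightarrow> \<phi> (g \<otimes>\<^bsub>G\<^esub> h) x = \<phi> g (\<phi> h x)"
  using group_action.composition_rule[OF act] by simp

lemma phi_inv1: "g \<in> carrier G \<Longrightarrow> \<phi> (inv\<^bsub>G\<^esub> g) (\<phi> g x) = x"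
  using phi_mult[of "inv\<^bsub>G\<^esub> g" g x] grp by (simp add: group.l_inv phi_one)

lemma phi_inv2: "g \<in> carrier G \<Longrightarrow> \<phi> g (\<phi> (inv\<^bsub>G\<^esub> g) x) = x"
  using phi_mult[of g "inv\<^bsub>G\<^esub> g" x] grp by (simp add: group.r_inv phi_one)

lemma T_apply: "T g f x = f (\<phi> (inv\<^bsub>G\<^esub> g) x)" by (simp add: transl_def)

lemma T_mult: "g \<in> carrier G \<Longrightarrow> h \<in> carrier G \<Longrightarrow> T (g \<otimes>\<^bsub>G\<^esub> h) f = T g (T h f)"
  unfolding transl_def using grp
  by (simp add: group.inv_mult_group phi_mult)

lemma T_one: "T \<one>\<^bsub>G\<^esub> f = f"
  unfolding transl_def using grp by (simp add: phi_one monoid.inv_one group.is_monoid)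

lemma T_inv: "g \<in> carrier G \<Longrightarrow> T (inv\<^bsub>G\<^esub> g) f x = f (\<phi> g x)"
  unfolding transl_def using grp by simp

lemma T_scale: "T g (\<lambda>x. a * f x) = (\<lambda>x. a * T g f x)"
  by (rule ext) (simp add: transl_def)

lemma T_eqn: "g \<in> carrier G \<Longrightarrow> eqn lam u \<Longrightarrow> eqn lam (T g u)"
proof -
  assume g: "g \<in> carrier G" and u: "eqn lam u"
  have "H_op b c (T g u) = T g (H_op b c u)" using ginv g dom_all by (auto simp: G_invariant_def)
  then show ?thesis using u unfolding eqn_iff by (simp add: transl_def)
qed

lemma T_Pl: "g \<in> carrier G \<Longrightarrow> u \<in> Pl lam \<Longrightarrow> T g u \<in> Pl lam"
proof -
  assume g: "g \<in> carrier G" and u: "u \<in> Pl lam"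
  then obtain x0 where "u x0 \<noteq> 0" by (auto simp: Pl_def)
  then have "T g u (\<phi> g x0) \<noteq> 0" by (simp add: transl_def phi_inv1 g)
  then have "T g u \<noteq> (\<lambda>_. 0)" by force
  then show ?thesis using u g T_eqn by (auto simp: Pl_def transl_def)
qed

lemma eqn_lin: "eqn lam u \<Longrightarrow> eqn lam v \<Longrightarrow> eqn lam (\<lambda>x. a * u x + d * v x)"
  unfolding eqn_def
proof
  assume u: "\<forall>x. (\<Sum>y\<in>nb x. b x y * u y) = (deg x + c x - lam) * u x"
    and v: "\<forall>x. (\<Sum>y\<in>nb x. b x y * v y) = (deg x + c x - lam) * v x"
  fix x
  have "(\<Sum>y\<in>nb x. b x y * (a * u y + d * v y)) = a * (\<Sum>y\<in>nb x. b x y * u y) + d * (\<Sum>y\<in>nb x. b x y * v y)"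
    by (simp add: sum.distrib sum_distrib_left algebra_simps)
  also have "\<dots> = (deg x + c x - lam) * (a * u x + d * v x)"
    by (simp only: u[rule_format] v[rule_format]) (simp add: algebra_simps)
  finally show "(\<Sum>y\<in>nb x. b x y * (a * u y + d * v y)) = (deg x + c x - lam) * (a * u x + d * v x)" .
qed

lemma eqn_scale: "eqn lam u \<Longrightarrow> eqn lam (\<lambda>x. a * u x)"
  using eqn_lin[of lam u u a 0] by simp

lemma eqn_limit:
  assumes "\<And>n. eqn lam (k n)" and "\<And>x. (\<lambda>n. k n x) \<longlonglongrightarrow> u x"
  shows "eqn lam u"
  unfolding eqn_def
proof
  fix x
  have "(\<lambda>n. \<Sum>y\<in>nb x. b x y * k n y) \<longlonglongrightarrow> (\<Sum>y\<in>nb x. b x y * u y)"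
    by (intro tendsto_sum tendsto_mult tendsto_const assms(2))
  moreover have "(\<lambda>n. (deg x + c x - lam) * k n x) \<longlonglongrightarrow> (deg x + c x - lam) * u x"
    by (intro tendsto_mult tendsto_const assms(2))
  moreover have "(\<lambda>n. \<Sum>y\<in>nb x. b x y * k n y) = (\<lambda>n. (deg x + c x - lam) * k n x)"
    using assms(1) by (auto simp: eqn_def)
  ultimately show "(\<Sum>y\<in>nb x. b x y * u y) = (deg x + c x - lam) * u x"
    using LIMSEQ_unique by metis
qed


definition Kc :: "real \<Rightarrow> 'x \<Rightarrow> 'x \<Rightarrow> real" where
  "Kc lam p q = max 0 ((deg p + c p - lam) / b p q)"

lemma edge_bound:
  assumes u: "eqn lam u" "\<forall>x. 0 \<le> u x" and pq: "b p q > 0"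
  shows "u q \<le> Kc lam p q * u p"
proof -
  have q: "q \<in> nb p" using pq by (simp add: nb_def)
  have "b p q * u q \<le> (\<Sum>y\<in>nb p. b p y * u y)"
    using q fin_nb u(2) bnn by (intro member_le_sum) (auto intro: mult_nonneg_nonneg)
  also have "\<dots> = (deg p + c p - lam) * u p" using u(1) by (simp add: eqn_def)
  finally have "u q \<le> (deg p + c p - lam) / b p q * u p" using pq
    by (simp add: field_simps)
  also have "\<dots> \<le> Kc lam p q * u p" unfolding Kc_def using u(2)
    by (intro mult_right_mono) auto
  finally show ?thesis .
qed

lemma harnack_path:
  assumes "(\<lambda>u v. 0 < b u v)\<^sup>*\<^sup>* p q"
  shows "\<exists>C\<ge>0. \<forall>u. eqn lam u \<longrightarrow> (\<forall>x. 0 \<le> u x) \<longrightarrow> u q \<le> C * u p"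
  using assms
proof (induction rule: rtranclp_induct)
  case base
  then show ?case by (intro exI[of _ 1]) auto
next
  case (step q r)
  then obtain C where C: "C \<ge> 0" "\<forall>u. eqn lam u \<longrightarrow> (\<forall>x. 0 \<le> u x) \<longrightarrow> u q \<le> C * u p" by blast
  show ?case
  proof (intro exI[of _ "Kc lam q r * C"] conjI allI impI)
    show "0 \<le> Kc lam q r * C" using C by (simp add: Kc_def)
    fix u assume u: "eqn lam u" "\<forall>x. 0 \<le> u x"
    have "u r \<le> Kc lam q r * u q" using edge_bound[OF u step(2)] .
    also have "\<dots> \<le> Kc lam q r * (C * u p)" using C u by (intro mult_left_mono) (auto simp: Kc_def)
    finally show "u r \<le> Kc lam q r * C * u p" by (simp add: mult.assoc)
  qed
qed

lemma harnack: "\<exists>C\<ge>0. \<forall>u. eqn lam u \<longrightarrow> (\<forall>x. 0 \<le> u x) \<longrightarrow> u q \<le> C * u p"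
  using conn by (intro harnack_path) (simp add: graph_connected_def)

lemma zero_everywhere:
  assumes "eqn lam u" "\<forall>x. 0 \<le> u x" "u p = 0" shows "u q = 0"
proof -
  obtain C where "u q \<le> C * u p" using harnack[of lam q p] assms by blast
  then show ?thesis using assms by (metis mult_zero_right order_antisym_conv)
qed

lemma Pl_pos: "u \<in> Pl lam \<Longrightarrow> u x > 0"
proof (rule ccontr)
  assume u: "u \<in> Pl lam" "\<not> u x > 0"
  then have "u x = 0" by (auto simp: Pl_def less_eq_real_def)
  then have "\<forall>q. u q = 0" using zero_everywhere u by (auto simp: Pl_def)
  then show False using u by (auto simp: Pl_def)
qed

definition hb :: "real \<Rightarrow> 'x \<Rightarrow> 'g \<Rightarrow> real \<Rightarrow> bool" where
  "hb lam v g C \<longleftrightarrow> 0 \<le> C \<and> (\<forall>h\<in>Pl lam. h (\<phi> g v) \<le> C * h v)"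

lemma hb_ex: "\<exists>C. hb lam v g C"
proof -
  obtain C where "C \<ge> 0" "\<forall>u. eqn lam u \<longrightarrow> (\<forall>x. 0 \<le> u x) \<longrightarrow> u (\<phi> g v) \<le> C * u v"
    using harnack by blast
  then show ?thesis by (auto simp: hb_def Pl_def)
qed

lemma hb_mult:
  assumes g: "g \<in> carrier G" and g': "g' \<in> carrier G" and h1: "hb lam v g C1" and h2: "hb lam v g' C2"
  shows "hb lam v (g \<otimes>\<^bsub>G\<^esub> g') (C1 * C2)"
  unfolding hb_def
proof (intro conjI ballI)
  show "0 \<le> C1 * C2" using h1 h2 by (simp add: hb_def)
  fix h assume h: "h \<in> Pl lam"
  have ih: "inv\<^bsub>G\<^esub> g \<in> carrier G" using g grp by simp
  have "h (\<phi> (g \<otimes>\<^bsub>G\<^esub> g') v) = T (inv\<^bsub>G\<^esub> g) h (\<phi> g' v)"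
    using g g' by (simp add: phi_mult T_inv)
  also have "\<dots> \<le> C2 * T (inv\<^bsub>G\<^esub> g) h v"
    using h2 T_Pl[OF ih h] by (auto simp: hb_def)
  also have "T (inv\<^bsub>G\<^esub> g) h v = h (\<phi> g v)" using g by (simp add: T_inv)
  also have "C2 * h (\<phi> g v) \<le> C2 * (C1 * h v)"
    using h1 h h2 by (intro mult_left_mono) (auto simp: hb_def)
  finally show "h (\<phi> (g \<otimes>\<^bsub>G\<^esub> g') v) \<le> C1 * C2 * h v" by (simp add: algebra_simps)
qed

lemma hb_pow:
  assumes g: "g \<in> carrier G" and h: "hb lam v g C"
  shows "hb lam v (g [^]\<^bsub>G\<^esub> (n::nat)) (C ^ n)"
proof (induction n)
  case 0
  then show ?case using grp by (simp add: hb_def phi_one)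
next
  case (Suc n)
  have "hb lam v (g [^]\<^bsub>G\<^esub> n \<otimes>\<^bsub>G\<^esub> g) (C ^ n * C)"
    using hb_mult[OF _ g Suc h] grp g by (simp add: group.is_monoid monoid.nat_pow_closed)
  then show ?case using grp by (simp add: group.is_monoid monoid.nat_pow_Suc mult.commute)
qed

lemma T_pow_eigen:
  assumes w: "w \<in> carrier G" and e: "T w h = (\<lambda>z. \<alpha> * h z)"
  shows "T (w [^]\<^bsub>G\<^esub> (k::nat)) h = (\<lambda>z. \<alpha> ^ k * h z)"
proof (induction k)
  case 0
  then show ?case using grp T_one by simp
next
  case (Suc k)
  have "T (w [^]\<^bsub>G\<^esub> Suc k) h = T (w [^]\<^bsub>G\<^esub> k) (T w h)"
    using grp w by (simp add: group.is_monoid monoid.nat_pow_Suc T_mult monoid.nat_pow_closed)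
  also have "\<dots> = (\<lambda>z. \<alpha> * (\<alpha> ^ k * h z))" using Suc by (simp add: e T_scale)
  finally show ?case by (simp add: mult.assoc)
qed

lemma growth:
  assumes x: "x \<in> carrier G" and y: "y \<in> carrier G"
    and wdef: "w = x \<otimes>\<^bsub>G\<^esub> y \<otimes>\<^bsub>G\<^esub> inv\<^bsub>G\<^esub> x \<otimes>\<^bsub>G\<^esub> inv\<^bsub>G\<^esub> y"
    and eqv: "\<And>(n::nat) h. h \<in> Pl lam \<Longrightarrow> T (w [^]\<^bsub>G\<^esub> (n*n)) h =
        T (x [^]\<^bsub>G\<^esub> n \<otimes>\<^bsub>G\<^esub> y [^]\<^bsub>G\<^esub> n \<otimes>\<^bsub>G\<^esub> inv\<^bsub>G\<^esub> (x [^]\<^bsub>G\<^esub> n) \<otimes>\<^bsub>G\<^esub> inv\<^bsub>G\<^esub> (y [^]\<^bsub>G\<^esub> n)) h"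
    and h: "h \<in> Pl lam" and e: "T w h = (\<lambda>z. \<alpha> * h z)"
  shows "\<alpha> \<le> 1"
proof (rule ccontr)
  assume "\<not> \<alpha> \<le> 1"
  then have a1: "\<alpha> > 1" by simp
  interpret grp: group G by (rule grp)
  have wC: "w \<in> carrier G" using x y wdef by simp
  fix v :: 'x
  obtain Cx where Cx: "hb lam v x Cx" using hb_ex by blast
  obtain Cy where Cy: "hb lam v y Cy" using hb_ex by blast
  obtain Cxi where Cxi: "hb lam v (inv\<^bsub>G\<^esub> x) Cxi" using hb_ex by blast
  obtain Cyi where Cyi: "hb lam v (inv\<^bsub>G\<^esub> y) Cyi" using hb_ex by blast
  define D where "D = Cy * Cx * Cyi * Cxi"
  have D0: "D \<ge> 0" using Cx Cy Cxi Cyi by (simp add: hb_def D_def)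
  have bound: "\<alpha> ^ (n*n) \<le> D ^ n" for n
  proof -
    define q where "q = x [^]\<^bsub>G\<^esub> n \<otimes>\<^bsub>G\<^esub> y [^]\<^bsub>G\<^esub> n \<otimes>\<^bsub>G\<^esub> inv\<^bsub>G\<^esub> (x [^]\<^bsub>G\<^esub> n) \<otimes>\<^bsub>G\<^esub> inv\<^bsub>G\<^esub> (y [^]\<^bsub>G\<^esub> n)"
    have iq: "inv\<^bsub>G\<^esub> q = y [^]\<^bsub>G\<^esub> n \<otimes>\<^bsub>G\<^esub> x [^]\<^bsub>G\<^esub> n \<otimes>\<^bsub>G\<^esub> (inv\<^bsub>G\<^esub> y) [^]\<^bsub>G\<^esub> n \<otimes>\<^bsub>G\<^esub> (inv\<^bsub>G\<^esub> x) [^]\<^bsub>G\<^esub> n"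
      unfolding q_def using x y by (simp add: grp.inv_mult_group grp.nat_pow_inv grp.m_assoc)
    have "hb lam v (inv\<^bsub>G\<^esub> q) (Cy ^ n * Cx ^ n * Cyi ^ n * Cxi ^ n)"
      unfolding iq using x y
      by (intro hb_mult hb_pow Cx Cy Cxi Cyi) auto
    then have hbq: "hb lam v (inv\<^bsub>G\<^esub> q) (D ^ n)" by (simp add: D_def power_mult_distrib)
    have "\<alpha> ^ (n*n) * h v = T (w [^]\<^bsub>G\<^esub> (n*n)) h v" using T_pow_eigen[OF wC e] by simp
    also have "T (w [^]\<^bsub>G\<^esub> (n*n)) h = T q h" unfolding q_def by (rule eqv[OF h])
    also have "T q h v = h (\<phi> (inv\<^bsub>G\<^esub> q) v)" by (simp add: T_apply)
    also have "\<dots> \<le> D ^ n * h v" using hbq h by (simp add: hb_def)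
    finally show ?thesis using Pl_pos[OF h, of v] by simp
  qed
  obtain n where n: "max D 1 < \<alpha> ^ n" using real_arch_pow[OF a1] by blast
  then have "n \<noteq> 0" by (metis less_irrefl max.strict_boundedE power_0)
  have "(\<alpha> ^ n) ^ n \<le> D ^ n" using bound[of n] by (simp add: power_mult)
  moreover obtain m where "n = Suc m" using \<open>n \<noteq> 0\<close> not0_implies_Suc by blast
  ultimately have "\<alpha> ^ n \<le> D" using D0 power_le_imp_le_base by metis
  then show False using n by simp
qed


lemma Pl_scale: "a > 0 \<Longrightarrow> u \<in> Pl lam \<Longrightarrow> (\<lambda>x. a * u x) \<in> Pl lam"
  unfolding Pl_def by (auto simp: eqn_scale fun_eq_iff)

lemma suplim:
  assumes r: "r \<in> carrier G"
    and comm: "\<And>g h. g \<in> carrier G \<Longrightarrow> h \<in> Pl lam \<Longrightarrow> T g (T r h) = T r (T g h)"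
    and eig: "\<And>h \<alpha>. h \<in> Pl lam \<Longrightarrow> T r h = (\<lambda>z. \<alpha> * h z) \<Longrightarrow> \<alpha> \<le> 1"
    and f: "f \<in> Pl lam"
  shows "T r f p \<le> f p"
proof -
  interpret grp: group G by (rule grp)
  obtain V where V: "finite V" "(\<Union>g\<in>carrier G. \<phi> g ` V) = UNIV" using cc by (auto simp: cocompact_def)
  have fpos: "\<And>x. f x > 0" using Pl_pos[OF f] .
  define \<rho> where "\<rho> p = T r f p / f p" for p
  have ri: "inv\<^bsub>G\<^esub> r \<in> carrier G" using r by simp
  have Tr_shift: "T r f (\<phi> g p) = T r (T (inv\<^bsub>G\<^esub> g) f) p" if g: "g \<in> carrier G" for g p
  proof -
    have "T r f (\<phi> g p) = T (inv\<^bsub>G\<^esub> g) (T r f) p" using g by (simp add: T_inv)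
    also have "\<dots> = T r (T (inv\<^bsub>G\<^esub> g) f) p" using comm[OF _ f, of "inv\<^bsub>G\<^esub> g"] g by simp
    finally show ?thesis .
  qed
  have bnd: "\<exists>C. \<forall>g\<in>carrier G. \<rho> (\<phi> g v) \<le> C" for v
  proof -
    obtain C where C: "C \<ge> 0" "\<forall>u. eqn lam u \<longrightarrow> (\<forall>x. 0 \<le> u x) \<longrightarrow> u (\<phi> (inv\<^bsub>G\<^esub> r) v) \<le> C * u v"
      using harnack by blast
    have "\<rho> (\<phi> g v) \<le> C" if g: "g \<in> carrier G" for g
    proof -
      have k: "T (inv\<^bsub>G\<^esub> g) f \<in> Pl lam" using T_Pl g f by simp
      have "T r f (\<phi> g v) = T (inv\<^bsub>G\<^esub> g) f (\<phi> (inv\<^bsub>G\<^esub> r) v)" using Tr_shift[OF g] by (simp add: T_apply)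
      also have "\<dots> \<le> C * T (inv\<^bsub>G\<^esub> g) f v" using C k by (auto simp: Pl_def)
      also have "T (inv\<^bsub>G\<^esub> g) f v = f (\<phi> g v)" using g by (simp add: T_inv)
      finally show ?thesis unfolding \<rho>_def using fpos[of "\<phi> g v"] by (simp add: divide_le_eq)
    qed
    then show ?thesis by blast
  qed
  define Mv where "Mv v = Sup ((\<lambda>g. \<rho> (\<phi> g v)) ` carrier G)" for v
  have ne: "(\<lambda>g. \<rho> (\<phi> g v)) ` carrier G \<noteq> {}" for v by auto
  have bdd: "bdd_above ((\<lambda>g. \<rho> (\<phi> g v)) ` carrier G)" for v
    using bnd[of v] by (auto simp: bdd_above_def)
  have le_Mv: "\<rho> (\<phi> g v) \<le> Mv v" if "g \<in> carrier G" for g v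
    unfolding Mv_def using that bdd by (intro cSup_upper) auto
  have Vne: "V \<noteq> {}" using V by auto
  define M where "M = Max (Mv ` V)"
  have "M \<in> Mv ` V" unfolding M_def using V Vne by (intro Max_in) auto
  then obtain v where v: "v \<in> V" "Mv v = M" by auto
  have rho_le: "\<rho> p \<le> M" for p
  proof -
    obtain g v' where "g \<in> carrier G" "v' \<in> V" "p = \<phi> g v'" using V(2) by blast
    then have "\<rho> p \<le> Mv v'" using le_Mv by simp
    also have "\<dots> \<le> M" unfolding M_def using V \<open>v' \<in> V\<close> by simp
    finally show ?thesis .
  qed
  have "\<exists>g\<in>carrier G. M - 1 / (real n + 1) < \<rho> (\<phi> g v)" for n :: nat
  proof -
    have "M - 1 / (real n + 1) < Mv v" using v by simp
    then show ?thesis unfolding Mv_def using less_cSupD[OF ne] by blast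
  qed
  then obtain gs where gs: "\<And>n. gs n \<in> carrier G" "\<And>n. M - 1 / (real n + 1) < \<rho> (\<phi> (gs n) v)"
    by metis
  define k where "k n p = (1 / f (\<phi> (gs n) v)) * T (inv\<^bsub>G\<^esub> (gs n)) f p" for n p
  have kP: "(\<lambda>p. k n p) \<in> Pl lam" for n
    unfolding k_def using fpos gs T_Pl f by (intro Pl_scale) auto
  have kv: "k n v = 1" for n unfolding k_def using gs fpos[of "\<phi> (gs n) v"] by (simp add: T_inv)
  have kbd: "\<bar>k n p\<bar> \<le> Cp" if "\<forall>u. eqn lam u \<longrightarrow> (\<forall>x. 0 \<le> u x) \<longrightarrow> u p \<le> Cp * u v" for n p Cp
  proof -
    have "k n p \<le> Cp * k n v" using that kP[of n] by (auto simp: Pl_def)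
    moreover have "k n p \<ge> 0" using kP[of n] by (auto simp: Pl_def)
    ultimately show ?thesis using kv by simp
  qed
  obtain B where B: "\<And>p. \<forall>u. eqn lam u \<longrightarrow> (\<forall>x. 0 \<le> u x) \<longrightarrow> u p \<le> B p * u v"
    using harnack[of lam _ v] by metis
  obtain s kinf where s: "strict_mono s" and lim: "\<And>p. (\<lambda>n. k (s n) p) \<longlonglongrightarrow> kinf p"
    using diag_conv[OF cnt, of k B] kbd[OF B] by blast
  have Trk: "T r (\<lambda>p. k n p) p = \<rho> (\<phi> (gs n) p) * k n p" for n p
  proof -
    have "T r (\<lambda>p. k n p) p = (1 / f (\<phi> (gs n) v)) * T r (T (inv\<^bsub>G\<^esub> (gs n)) f) p"
      unfolding k_def by (simp add: T_apply)
    also have "\<dots> = (1 / f (\<phi> (gs n) v)) * T r f (\<phi> (gs n) p)" using Tr_shift[OF gs(1)] by simp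
    also have "\<dots> = \<rho> (\<phi> (gs n) p) * k n p"
      unfolding k_def \<rho>_def using gs fpos[of "\<phi> (gs n) p"] by (simp add: T_inv)
    finally show ?thesis .
  qed
  have kinf_eqn: "eqn lam kinf"
    using kP by (intro eqn_limit[OF _ lim]) (auto simp: Pl_def)
  have kinf_nn: "0 \<le> kinf p" for p
    using kP by (intro LIMSEQ_le_const[OF lim]) (auto simp: Pl_def)
  have kinf_v: "kinf v = 1" using lim[of v] kv by (simp add: LIMSEQ_const_iff)
  have "kinf \<noteq> (\<lambda>_. 0)"
  proof
    assume "kinf = (\<lambda>_. 0)"
    then have "kinf v = 0" by simp
    then show False using kinf_v by simp
  qed
  then have kinfP: "kinf \<in> Pl lam" using kinf_eqn kinf_nn unfolding Pl_def by blast
  have Tk_lim: "(\<lambda>n. T r (\<lambda>p. k (s n) p) p) \<longlonglongrightarrow> T r kinf p" for p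
    unfolding T_apply using lim by simp
  have Tk_le: "T r kinf p \<le> M * kinf p" for p
  proof (rule LIMSEQ_le[OF Tk_lim])
    show "(\<lambda>n. M * k (s n) p) \<longlonglongrightarrow> M * kinf p" by (intro tendsto_mult tendsto_const lim)
    show "\<exists>N. \<forall>n\<ge>N. T r (\<lambda>p. k (s n) p) p \<le> M * k (s n) p"
      using Trk rho_le kP by (auto simp: Pl_def intro!: mult_right_mono)
  qed
  have Tk_v: "T r kinf v = M"
  proof -
    have "(\<lambda>n. T r (\<lambda>p. k (s n) p) v) \<longlonglongrightarrow> M"
    proof (rule real_tendsto_sandwich[of "\<lambda>n. M - 1 / (real (s n) + 1)" _ _ "\<lambda>n. M"])
      show "\<forall>\<^sub>F n in sequentially. M - 1 / (real (s n) + 1) \<le> T r (\<lambda>p. k (s n) p) v"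
        using Trk kv gs(2) by (auto intro!: always_eventually less_imp_le)
      show "\<forall>\<^sub>F n in sequentially. T r (\<lambda>p. k (s n) p) v \<le> M"
        using Trk kv rho_le by (auto intro!: always_eventually)
      show "(\<lambda>n. M) \<longlonglongrightarrow> M" by simp
      have "(\<lambda>n. inverse (real (Suc n))) \<longlonglongrightarrow> 0" by (rule LIMSEQ_inverse_real_of_nat)
      from LIMSEQ_subseq_LIMSEQ[OF this s]
      have "(\<lambda>n. 1 / (real (s n) + 1)) \<longlonglongrightarrow> 0" by (simp add: o_def inverse_eq_divide add.commute)
      then show "(\<lambda>n. M - 1 / (real (s n) + 1)) \<longlonglongrightarrow> M"
        using tendsto_diff[OF tendsto_const, of _ 0 sequentially M] by simp
    qed
    then show ?thesis using Tk_lim[of v] LIMSEQ_unique by blast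
  qed
  define u where "u p = M * kinf p - T r kinf p" for p
  have u_eqn: "eqn lam u"
  proof -
    have "eqn lam (T r kinf)" using T_eqn[OF r kinf_eqn] .
    from eqn_lin[OF kinf_eqn this, of M "-1"] show ?thesis by (simp add: u_def[abs_def])
  qed
  have u_nn: "\<forall>p. 0 \<le> u p" using Tk_le by (simp add: u_def)
  have "u v = 0" using Tk_v kinf_v by (simp add: u_def)
  then have "\<forall>p. u p = 0" using zero_everywhere[OF u_eqn u_nn] by blast
  then have "T r kinf = (\<lambda>p. M * kinf p)" by (auto simp: u_def fun_eq_iff)
  then have "M \<le> 1" using eig[OF kinfP] by blast
  have "\<rho> p \<le> 1" using rho_le[of p] \<open>M \<le> 1\<close> by simp
  then show ?thesis using fpos[of p] unfolding \<rho>_def by (simp add: divide_le_eq)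
qed

end

lemma (in group) commute_inv:
  assumes "a \<in> carrier G" "b \<in> carrier G" "a \<otimes> b = b \<otimes> a"
  shows "a \<otimes> inv b = inv b \<otimes> a"
proof -
  have "a \<otimes> inv b = inv b \<otimes> (b \<otimes> a) \<otimes> inv b" using assms(1,2) by (simp add: m_assoc)
  also have "\<dots> = inv b \<otimes> (a \<otimes> b) \<otimes> inv b" using assms(3) by simp
  also have "\<dots> = inv b \<otimes> a" using assms(1,2) by (simp add: m_assoc)
  finally show ?thesis .
qed

lemma (in group) commutator_one:
  assumes "a \<in> carrier G" "b \<in> carrier G" "a \<otimes> b \<otimes> inv a \<otimes> inv b = \<one>"
  shows "a \<otimes> b = b \<otimes> a"
proof -
  have "a \<otimes> b \<otimes> inv a \<otimes> inv b \<otimes> b \<otimes> a = b \<otimes> a" using assms by simp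
  then show ?thesis using assms by (simp add: m_assoc)
qed

context gsetting begin

definition Kl :: "real \<Rightarrow> 'g set" where
  "Kl lam = {g \<in> carrier G. \<forall>h\<in>Pl lam. T g h = h}"

lemma K_sub: "subgroup (Kl lam) G"
proof -
  interpret grp: group G by (rule grp)
  show ?thesis
  proof
    show "Kl lam \<subseteq> carrier G" by (auto simp: Kl_def)
    show "\<one>\<^bsub>G\<^esub> \<in> Kl lam" by (auto simp: Kl_def T_one)
    fix g g' assume g: "g \<in> Kl lam" and g': "g' \<in> Kl lam"
    then show "g \<otimes>\<^bsub>G\<^esub> g' \<in> Kl lam" by (auto simp: Kl_def T_mult)
  next
    fix g assume g: "g \<in> Kl lam"
    have "T (inv\<^bsub>G\<^esub> g) h = h" if h: "h \<in> Pl lam" for h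
    proof -
      have "T (inv\<^bsub>G\<^esub> g) h = T (inv\<^bsub>G\<^esub> g) (T g h)" using g h by (simp add: Kl_def)
      also have "\<dots> = T (inv\<^bsub>G\<^esub> g \<otimes>\<^bsub>G\<^esub> g) h" by (rule T_mult[symmetric]) (use g in \<open>auto simp: Kl_def\<close>)
      finally show ?thesis using g by (simp add: Kl_def T_one)
    qed
    then show "inv\<^bsub>G\<^esub> g \<in> Kl lam" using g by (auto simp: Kl_def)
  qed
qed

lemma K_normal: "Kl lam \<lhd> G"
proof -
  interpret grp: group G by (rule grp)
  show ?thesis unfolding grp.normal_inv_iff
  proof (intro conjI K_sub ballI)
    fix x k assume x: "x \<in> carrier G" and k: "k \<in> Kl lam"
    have "T (x \<otimes>\<^bsub>G\<^esub> k \<otimes>\<^bsub>G\<^esub> inv\<^bsub>G\<^esub> x) h = h" if h: "h \<in> Pl lam" for h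
    proof -
      have "T (x \<otimes>\<^bsub>G\<^esub> k \<otimes>\<^bsub>G\<^esub> inv\<^bsub>G\<^esub> x) h = T x (T k (T (inv\<^bsub>G\<^esub> x) h))"
        using x k by (simp add: Kl_def T_mult)
      also have "T k (T (inv\<^bsub>G\<^esub> x) h) = T (inv\<^bsub>G\<^esub> x) h" using k T_Pl[OF _ h, of "inv\<^bsub>G\<^esub> x"] x
        by (simp add: Kl_def)
      also have "T x (T (inv\<^bsub>G\<^esub> x) h) = T (x \<otimes>\<^bsub>G\<^esub> inv\<^bsub>G\<^esub> x) h" by (rule T_mult[symmetric]) (use x in auto)
      finally show ?thesis using x by (simp add: T_one)
    qed
    then show "x \<otimes>\<^bsub>G\<^esub> k \<otimes>\<^bsub>G\<^esub> inv\<^bsub>G\<^esub> x \<in> Kl lam" using x k by (auto simp: Kl_def)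
  qed
qed

abbreviation Q :: "real \<Rightarrow> 'g set monoid" where "Q lam \<equiv> G Mod Kl lam"
abbreviation pr :: "real \<Rightarrow> 'g \<Rightarrow> 'g set" where "pr lam a \<equiv> Kl lam #>\<^bsub>G\<^esub> a"

lemma Q_group: "group (Q lam)" using K_normal by (rule normal.factorgroup_is_group)

lemma pr_hom: "group_hom G (Q lam) (pr lam)"
  using normal.r_coset_hom_Mod[OF K_normal] grp Q_group
  by (simp add: group_hom_def group_hom_axioms_def)

lemma T_coset:
  assumes a: "a1 \<in> carrier G" and b: "a2 \<in> carrier G" and e: "pr lam a1 = pr lam a2" and h: "h \<in> Pl lam"
  shows "T a1 h = T a2 h"
proof -
  interpret grp: group G by (rule grp)
  have "a1 \<in> pr lam a2" using grp.rcos_self[OF a K_sub[of lam]] e by simp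
  then have "a1 \<otimes>\<^bsub>G\<^esub> inv\<^bsub>G\<^esub> a2 \<in> Kl lam" using subgroup.rcos_module_imp[OF K_sub[of lam] grp b] by blast
  then obtain k where k: "k \<in> Kl lam" "a1 = k \<otimes>\<^bsub>G\<^esub> a2"
    using a b by (metis grp.inv_solve_right grp.m_closed grp.inv_closed subgroup.mem_carrier K_sub)
  have "T a1 h = T k (T a2 h)" using k b by (simp add: Kl_def T_mult)
  also have "\<dots> = T a2 h" using k T_Pl[OF b h] by (simp add: Kl_def)
  finally show ?thesis .
qed

definition central :: "real \<Rightarrow> 'g \<Rightarrow> bool" where
  "central lam r \<longleftrightarrow> (\<forall>g\<in>carrier G. pr lam g \<otimes>\<^bsub>Q lam\<^esub> pr lam r = pr lam r \<otimes>\<^bsub>Q lam\<^esub> pr lam g)"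

lemma central_comm:
  assumes r: "r \<in> carrier G" and cen: "central lam r" and g: "g \<in> carrier G" and h: "h \<in> Pl lam"
  shows "T g (T r h) = T r (T g h)"
proof -
  interpret ph: group_hom G "Q lam" "pr lam" by (rule pr_hom)
  have "pr lam (g \<otimes>\<^bsub>G\<^esub> r) = pr lam (r \<otimes>\<^bsub>G\<^esub> g)" using cen g r by (simp add: central_def)
  then have "T (g \<otimes>\<^bsub>G\<^esub> r) h = T (r \<otimes>\<^bsub>G\<^esub> g) h" using g r h by (intro T_coset) auto
  then show ?thesis using g r by (simp add: T_mult)
qed

lemma central_inv:
  assumes r: "r \<in> carrier G" and cen: "central lam r"
  shows "central lam (inv\<^bsub>G\<^esub> r)"
  unfolding central_def
proof
  interpret ph: group_hom G "Q lam" "pr lam" by (rule pr_hom)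
  fix g assume g: "g \<in> carrier G"
  have "pr lam g \<otimes>\<^bsub>Q lam\<^esub> inv\<^bsub>Q lam\<^esub> pr lam r = inv\<^bsub>Q lam\<^esub> pr lam r \<otimes>\<^bsub>Q lam\<^esub> pr lam g"
    using cen g r by (intro group.commute_inv[OF Q_group]) (auto simp: central_def)
  then show "pr lam g \<otimes>\<^bsub>Q lam\<^esub> pr lam (inv\<^bsub>G\<^esub> r) = pr lam (inv\<^bsub>G\<^esub> r) \<otimes>\<^bsub>Q lam\<^esub> pr lam g"
    using r by simp
qed

lemma eig_pos:
  assumes r: "r \<in> carrier G" and h: "h \<in> Pl lam" and e: "T r h = (\<lambda>z. \<alpha> * h z)"
  shows "\<alpha> > 0"
proof -
  fix z
  have "T r h z > 0" using Pl_pos[OF T_Pl[OF r h]] .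
  then show ?thesis using e Pl_pos[OF h, of z] by (simp add: zero_less_mult_iff)
qed

lemma eig_inv:
  assumes r: "r \<in> carrier G" and h: "h \<in> Pl lam" and e: "T (inv\<^bsub>G\<^esub> r) h = (\<lambda>z. \<alpha> * h z)"
  shows "T r h = (\<lambda>z. (1 / \<alpha>) * h z)"
proof -
  interpret grp: group G by (rule grp)
  have a: "\<alpha> > 0" using eig_pos[OF _ h e] r by simp
  have "h = T r (T (inv\<^bsub>G\<^esub> r) h)" using r by (simp add: T_mult[symmetric] T_one)
  also have "\<dots> = (\<lambda>z. \<alpha> * T r h z)" using e by (simp add: T_scale)
  finally have "\<And>z. h z = \<alpha> * T r h z" by (metis)
  then show ?thesis using a by (auto simp: fun_eq_iff field_simps)
qed

lemma in_K:
  assumes r: "r \<in> carrier G" and cen: "central lam r"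
    and eig: "\<And>h \<alpha>. h \<in> Pl lam \<Longrightarrow> T r h = (\<lambda>z. \<alpha> * h z) \<Longrightarrow> \<alpha> = 1"
  shows "r \<in> Kl lam"
proof -
  interpret grp: group G by (rule grp)
  have ri: "inv\<^bsub>G\<^esub> r \<in> carrier G" using r by simp
  have "T r f = f" if f: "f \<in> Pl lam" for f
  proof
    fix p
    have le1: "T r f q \<le> f q" for q
      by (rule suplim[OF r central_comm[OF r cen] _ f]) (use eig in auto)
    have le2: "T (inv\<^bsub>G\<^esub> r) f q \<le> f q" for q
    proof (rule suplim[OF ri central_comm[OF ri central_inv[OF r cen]] _ f])
      fix h \<alpha> assume h: "h \<in> Pl lam" and e: "T (inv\<^bsub>G\<^esub> r) h = (\<lambda>z. \<alpha> * h z)"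
      have "1 / \<alpha> = 1" using eig[OF h eig_inv[OF r h e]] .
      then show "\<alpha> \<le> 1" by (cases "\<alpha> = 0") auto
    qed auto
    have "f p = T r (T (inv\<^bsub>G\<^esub> r) f) p" using r by (simp add: T_mult[symmetric] T_one)
    also have "\<dots> = T (inv\<^bsub>G\<^esub> r) f (\<phi> (inv\<^bsub>G\<^esub> r) p)" by (simp add: T_apply)
    also have "\<dots> \<le> f (\<phi> (inv\<^bsub>G\<^esub> r) p)" by (rule le2)
    also have "\<dots> = T r f p" by (simp add: T_apply)
    finally show "T r f p = f p" using le1[of p] by simp
  qed
  then show ?thesis using r by (simp add: Kl_def)
qed


lemma comm_eig:
  assumes x: "x \<in> carrier G" and y: "y \<in> carrier G"
    and wdef: "w = x \<otimes>\<^bsub>G\<^esub> y \<otimes>\<^bsub>G\<^esub> inv\<^bsub>G\<^esub> x \<otimes>\<^bsub>G\<^esub> inv\<^bsub>G\<^esub> y"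
    and cen: "central lam w" and h: "h \<in> Pl lam" and e: "T w h = (\<lambda>z. \<alpha> * h z)"
  shows "\<alpha> \<le> 1"
proof (rule growth[OF x y wdef _ h e])
  interpret grp: group G by (rule grp)
  interpret ph: group_hom G "Q lam" "pr lam" by (rule pr_hom)
  interpret Qg: group "Q lam" by (rule Q_group)
  fix n :: nat and h' assume h': "h' \<in> Pl lam"
  have wC: "w \<in> carrier G" using wdef x y by simp
  define X where "X = pr lam x"
  define Y where "Y = pr lam y"
  define W where "W = pr lam w"
  have XC: "X \<in> carrier (Q lam)" and YC: "Y \<in> carrier (Q lam)" using x y by (auto simp: X_def Y_def)
  have W: "W = X \<otimes>\<^bsub>Q lam\<^esub> Y \<otimes>\<^bsub>Q lam\<^esub> inv\<^bsub>Q lam\<^esub> X \<otimes>\<^bsub>Q lam\<^esub> inv\<^bsub>Q lam\<^esub> Y"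
    using x y by (simp add: W_def X_def Y_def wdef)
  have WX: "W \<otimes>\<^bsub>Q lam\<^esub> X = X \<otimes>\<^bsub>Q lam\<^esub> W" using cen x by (simp add: central_def W_def X_def)
  have WY: "W \<otimes>\<^bsub>Q lam\<^esub> Y = Y \<otimes>\<^bsub>Q lam\<^esub> W" using cen y by (simp add: central_def W_def Y_def)
  have eq: "X [^]\<^bsub>Q lam\<^esub> n \<otimes>\<^bsub>Q lam\<^esub> Y [^]\<^bsub>Q lam\<^esub> n \<otimes>\<^bsub>Q lam\<^esub> inv\<^bsub>Q lam\<^esub> (X [^]\<^bsub>Q lam\<^esub> n) \<otimes>\<^bsub>Q lam\<^esub> inv\<^bsub>Q lam\<^esub> (Y [^]\<^bsub>Q lam\<^esub> n)
      = W [^]\<^bsub>Q lam\<^esub> (n * n)"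
    by (rule group.comm_pow_sq[OF Q_group XC YC W WX WY])
  have "pr lam (w [^]\<^bsub>G\<^esub> (n * n)) = pr lam (x [^]\<^bsub>G\<^esub> n \<otimes>\<^bsub>G\<^esub> y [^]\<^bsub>G\<^esub> n \<otimes>\<^bsub>G\<^esub> inv\<^bsub>G\<^esub> (x [^]\<^bsub>G\<^esub> n) \<otimes>\<^bsub>G\<^esub> inv\<^bsub>G\<^esub> (y [^]\<^bsub>G\<^esub> n))"
    using eq x y wC by (simp add: ph.hom_nat_pow X_def Y_def W_def)
  then show "T (w [^]\<^bsub>G\<^esub> (n * n)) h' = T (x [^]\<^bsub>G\<^esub> n \<otimes>\<^bsub>G\<^esub> y [^]\<^bsub>G\<^esub> n \<otimes>\<^bsub>G\<^esub> inv\<^bsub>G\<^esub> (x [^]\<^bsub>G\<^esub> n) \<otimes>\<^bsub>G\<^esub> inv\<^bsub>G\<^esub> (y [^]\<^bsub>G\<^esub> n)) h'"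
    using x y wC h' by (intro T_coset) auto
qed

lemma comm_in_K:
  assumes x: "x \<in> carrier G" and y: "y \<in> carrier G"
    and wdef: "w = x \<otimes>\<^bsub>G\<^esub> y \<otimes>\<^bsub>G\<^esub> inv\<^bsub>G\<^esub> x \<otimes>\<^bsub>G\<^esub> inv\<^bsub>G\<^esub> y"
    and cen: "central lam w"
  shows "w \<in> Kl lam"
proof -
  interpret grp: group G by (rule grp)
  have wC: "w \<in> carrier G" using wdef x y by simp
  show ?thesis
  proof (rule in_K[OF wC cen])
    fix h \<alpha> assume h: "h \<in> Pl lam" and e: "T w h = (\<lambda>z. \<alpha> * h z)"
    have a1: "\<alpha> \<le> 1" by (rule comm_eig[OF x y wdef cen h e])
    have a0: "\<alpha> > 0" by (rule eig_pos[OF wC h e])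
    have iw: "inv\<^bsub>G\<^esub> w = y \<otimes>\<^bsub>G\<^esub> x \<otimes>\<^bsub>G\<^esub> inv\<^bsub>G\<^esub> y \<otimes>\<^bsub>G\<^esub> inv\<^bsub>G\<^esub> x"
      using x y by (simp add: wdef grp.inv_mult_group grp.m_assoc)
    have e': "T (inv\<^bsub>G\<^esub> (inv\<^bsub>G\<^esub> w)) h = (\<lambda>z. \<alpha> * h z)" using e wC by simp
    have "T (inv\<^bsub>G\<^esub> w) h = (\<lambda>z. (1 / \<alpha>) * h z)" using eig_inv[OF _ h e'] wC by simp
    then have "1 / \<alpha> \<le> 1" using comm_eig[OF y x iw central_inv[OF wC cen] h] by blast
    then show "\<alpha> = 1" using a0 a1 by (simp add: divide_le_eq)
  qed
qed

end

lemma lc_carrier: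
  assumes "group G" shows "lower_central G j \<subseteq> carrier G"
proof (induction j)
  case 0 then show ?case by simp
next
  case (Suc j)
  interpret grp: group G by (rule assms)
  have "{x \<otimes>\<^bsub>G\<^esub> y \<otimes>\<^bsub>G\<^esub> inv\<^bsub>G\<^esub> x \<otimes>\<^bsub>G\<^esub> inv\<^bsub>G\<^esub> y | x y. x \<in> carrier G \<and> y \<in> lower_central G j} \<subseteq> carrier G"
    using Suc by auto
  then show ?case by simp (rule grp.generate_incl)
qed

context gsetting begin

lemma lc_step:
  assumes "lower_central G (Suc (Suc j)) \<subseteq> Kl lam"
  shows "lower_central G (Suc j) \<subseteq> Kl lam"
proof -
  interpret grp: group G by (rule grp)
  interpret ph: group_hom G "Q lam" "pr lam" by (rule pr_hom)
  interpret Qg: group "Q lam" by (rule Q_group)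
  have lcj: "lower_central G j \<subseteq> carrier G" using lc_carrier grp by blast
  have gens: "{x \<otimes>\<^bsub>G\<^esub> y \<otimes>\<^bsub>G\<^esub> inv\<^bsub>G\<^esub> x \<otimes>\<^bsub>G\<^esub> inv\<^bsub>G\<^esub> y | x y. x \<in> carrier G \<and> y \<in> lower_central G j} \<subseteq> Kl lam"
  proof
    fix w assume "w \<in> {x \<otimes>\<^bsub>G\<^esub> y \<otimes>\<^bsub>G\<^esub> inv\<^bsub>G\<^esub> x \<otimes>\<^bsub>G\<^esub> inv\<^bsub>G\<^esub> y | x y. x \<in> carrier G \<and> y \<in> lower_central G j}"
    then obtain x y where xy: "x \<in> carrier G" "y \<in> lower_central G j"
      and wdef: "w = x \<otimes>\<^bsub>G\<^esub> y \<otimes>\<^bsub>G\<^esub> inv\<^bsub>G\<^esub> x \<otimes>\<^bsub>G\<^esub> inv\<^bsub>G\<^esub> y" by blast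
    have yC: "y \<in> carrier G" using xy lcj by blast
    have wC: "w \<in> carrier G" using wdef xy yC by simp
    have wlc: "w \<in> lower_central G (Suc j)"
      using xy wdef by (auto intro!: generate.incl)
    have "central lam w" unfolding central_def
    proof
      fix g assume g: "g \<in> carrier G"
      have "g \<otimes>\<^bsub>G\<^esub> w \<otimes>\<^bsub>G\<^esub> inv\<^bsub>G\<^esub> g \<otimes>\<^bsub>G\<^esub> inv\<^bsub>G\<^esub> w \<in> lower_central G (Suc (Suc j))"
        using g wlc by (auto intro!: generate.incl)
      then have "g \<otimes>\<^bsub>G\<^esub> w \<otimes>\<^bsub>G\<^esub> inv\<^bsub>G\<^esub> g \<otimes>\<^bsub>G\<^esub> inv\<^bsub>G\<^esub> w \<in> Kl lam" using assms by blast
      then have "pr lam (g \<otimes>\<^bsub>G\<^esub> w \<otimes>\<^bsub>G\<^esub> inv\<^bsub>G\<^esub> g \<otimes>\<^bsub>G\<^esub> inv\<^bsub>G\<^esub> w) = Kl lam"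
        using subgroup.rcos_const[OF K_sub grp] by blast
      then have "pr lam g \<otimes>\<^bsub>Q lam\<^esub> pr lam w \<otimes>\<^bsub>Q lam\<^esub> inv\<^bsub>Q lam\<^esub> pr lam g \<otimes>\<^bsub>Q lam\<^esub> inv\<^bsub>Q lam\<^esub> pr lam w = \<one>\<^bsub>Q lam\<^esub>"
        using g wC by simp
      then show "pr lam g \<otimes>\<^bsub>Q lam\<^esub> pr lam w = pr lam w \<otimes>\<^bsub>Q lam\<^esub> pr lam g"
        using g wC by (intro group.commutator_one[OF Q_group]) auto
    qed
    then show "w \<in> Kl lam" using comm_in_K[OF xy(1) yC wdef] by blast
  qed
  show ?thesis by simp (rule grp.generate_subgroup_incl[OF gens K_sub])
qed

lemma lc1_K:
  assumes nil: "nilpotent_group G"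
  shows "lower_central G 1 \<subseteq> Kl lam"
proof -
  interpret grp: group G by (rule grp)
  obtain n where n: "lower_central G n = {\<one>\<^bsub>G\<^esub>}" using nil by (auto simp: nilpotent_group_def)
  have base: "lower_central G (Suc n) \<subseteq> Kl lam"
  proof -
    have "{x \<otimes>\<^bsub>G\<^esub> y \<otimes>\<^bsub>G\<^esub> inv\<^bsub>G\<^esub> x \<otimes>\<^bsub>G\<^esub> inv\<^bsub>G\<^esub> y | x y. x \<in> carrier G \<and> y \<in> lower_central G n} \<subseteq> Kl lam"
    proof
      fix w assume "w \<in> {x \<otimes>\<^bsub>G\<^esub> y \<otimes>\<^bsub>G\<^esub> inv\<^bsub>G\<^esub> x \<otimes>\<^bsub>G\<^esub> inv\<^bsub>G\<^esub> y | x y. x \<in> carrier G \<and> y \<in> lower_central G n}"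
      then obtain x y where xy: "x \<in> carrier G" "y \<in> lower_central G n"
        and w: "w = x \<otimes>\<^bsub>G\<^esub> y \<otimes>\<^bsub>G\<^esub> inv\<^bsub>G\<^esub> x \<otimes>\<^bsub>G\<^esub> inv\<^bsub>G\<^esub> y" by blast
      have "y = \<one>\<^bsub>G\<^esub>" using xy(2) n by simp
      then have "w = \<one>\<^bsub>G\<^esub>" using xy(1) w by simp
      then show "w \<in> Kl lam" using subgroup.one_closed[OF K_sub] by simp
    qed
    then show ?thesis by simp (rule grp.generate_subgroup_incl[OF _ K_sub])
  qed
  have "\<forall>i\<le>n. lower_central G (Suc (n - i)) \<subseteq> Kl lam"
  proof (intro allI impI)
    fix i assume "i \<le> n"
    then show "lower_central G (Suc (n - i)) \<subseteq> Kl lam"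
    proof (induction i)
      case 0 then show ?case using base by simp
    next
      case (Suc i)
      have "i \<le> n" using Suc.prems by simp
      then have "lower_central G (Suc (n - i)) \<subseteq> Kl lam" by (rule Suc.IH)
      moreover have "Suc (n - i) = Suc (Suc (n - Suc i))" using Suc.prems by simp
      ultimately have "lower_central G (Suc (Suc (n - Suc i))) \<subseteq> Kl lam" by simp
      then show ?case by (rule lc_step)
    qed
  qed
  then have "lower_central G (Suc (n - n)) \<subseteq> Kl lam" by blast
  then show ?thesis by simp
qed

end

definition R0 :: "('g, 'm) monoid_scheme \<Rightarrow> 'g set \<Rightarrow> 'g set" where
  "R0 G S = generate G (lower_central G (Suc 0) \<union> S)"

definition Rs :: "('g, 'm) monoid_scheme \<Rightarrow> 'g set \<Rightarrow> 'g set" where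
  "Rs G S = {g \<in> carrier G. \<exists>n::nat. n > 0 \<and> g [^]\<^bsub>G\<^esub> n \<in> R0 G S}"

lemma (in comm_group) pow_prod_one:
  assumes A: "A \<in> carrier G" and B: "B \<in> carrier G" and a: "A [^] (n::nat) = \<one>" and b: "B [^] (m::nat) = \<one>"
  shows "(A \<otimes> B) [^] (n * m) = \<one>"
proof -
  have "(A \<otimes> B) [^] (n * m) = A [^] (n * m) \<otimes> B [^] (m * n)" using A B by (simp add: nat_pow_distrib mult.commute)
  also have "A [^] (n * m) = (A [^] n) [^] m" using A by (simp add: nat_pow_pow)
  also have "B [^] (m * n) = (B [^] m) [^] n" using B by (simp add: nat_pow_pow)
  finally show ?thesis using a b by simp
qed

context group begin

lemma rcos_eq_iff:
  assumes "subgroup H G" "x \<in> carrier G" "y \<in> carrier G"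
  shows "H #> x = H #> y \<longleftrightarrow> x \<otimes> inv y \<in> H"
proof
  assume "H #> x = H #> y"
  then have "x \<in> H #> y" using rcos_self[OF assms(2,1)] by simp
  then show "x \<otimes> inv y \<in> H" using subgroup.rcos_module_imp[OF assms(1) is_group assms(3)] by blast
next
  assume "x \<otimes> inv y \<in> H"
  then have "x \<in> H #> y" using subgroup.rcos_module_rev[OF assms(1) is_group assms(3,2)] by blast
  then show "H #> x = H #> y" using repr_independence[OF _ assms(3,1)] by simp
qed

lemma rcos_one_iff:
  assumes "subgroup H G" "x \<in> carrier G"
  shows "H #> x = H \<longleftrightarrow> x \<in> H"
  using coset_join1[OF _ assms(2,1)] coset_join2[OF assms(2,1)] by blast

lemma comm_in_lc1:
  assumes "x \<in> carrier G" "y \<in> carrier G"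
  shows "x \<otimes> y \<otimes> inv x \<otimes> inv y \<in> lower_central G (Suc 0)"
  using assms by (auto intro!: generate.incl)

lemma lc1_sub: "lower_central G (Suc 0) \<subseteq> carrier G"
  by simp (rule generate_incl, auto)

lemma normal_if_comm:
  assumes H: "subgroup H G" and C: "lower_central G (Suc 0) \<subseteq> H"
  shows "H \<lhd> G"
  unfolding normal_inv_iff
proof (intro conjI H ballI)
  fix x h assume x: "x \<in> carrier G" and h: "h \<in> H"
  have hC: "h \<in> carrier G" by (rule subgroup.mem_carrier[OF H h])
  have eq: "x \<otimes> h \<otimes> inv x = (x \<otimes> h \<otimes> inv x \<otimes> inv h) \<otimes> h" using x hC by (simp add: m_assoc)
  have "x \<otimes> h \<otimes> inv x \<otimes> inv h \<in> H" using C comm_in_lc1[OF x hC] by (rule subsetD)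
  then have "(x \<otimes> h \<otimes> inv x \<otimes> inv h) \<otimes> h \<in> H" using h by (rule subgroup.m_closed[OF H])
  then show "x \<otimes> h \<otimes> inv x \<in> H" by (subst eq)
qed

lemma comm_quot:
  assumes H: "subgroup H G" and C: "lower_central G (Suc 0) \<subseteq> H"
  shows "comm_group (G Mod H)"
proof (rule group.group_comm_groupI)
  have N: "H \<lhd> G" by (rule normal_if_comm[OF H C])
  show "group (G Mod H)" by (rule normal.factorgroup_is_group[OF N])
  fix p q assume "p \<in> carrier (G Mod H)" "q \<in> carrier (G Mod H)"
  then obtain a b where ab: "a \<in> carrier G" "b \<in> carrier G" "p = H #> a" "q = H #> b"
    by (auto simp: carrier_FactGroup)
  have "p \<otimes>\<^bsub>G Mod H\<^esub> q = H #> (a \<otimes> b)" using ab normal.rcos_sum[OF N] by simp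
  also have "\<dots> = H #> (b \<otimes> a)"
  proof -
    have "a \<otimes> b \<otimes> inv (b \<otimes> a) = a \<otimes> b \<otimes> inv a \<otimes> inv b" using ab by (simp add: inv_mult_group m_assoc)
    then have "a \<otimes> b \<otimes> inv (b \<otimes> a) \<in> H" using comm_in_lc1[OF ab(1,2)] C by auto
    then show ?thesis using rcos_eq_iff[OF H] ab by simp
  qed
  also have "\<dots> = q \<otimes>\<^bsub>G Mod H\<^esub> p" using ab normal.rcos_sum[OF N] by simp
  finally show "p \<otimes>\<^bsub>G Mod H\<^esub> q = q \<otimes>\<^bsub>G Mod H\<^esub> p" .
qed

context
  fixes S assumes S: "S \<subseteq> carrier G"
begin

lemma R0_sub: "subgroup (R0 G S) G"
  unfolding R0_def using lc1_sub S by (intro generate_is_subgroup) auto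

lemma lc1_R0: "lower_central G (Suc 0) \<subseteq> R0 G S"
  unfolding R0_def by (auto intro: generate.incl)

lemma S_R0: "S \<subseteq> R0 G S"
  unfolding R0_def by (auto intro: generate.incl)

lemma R0_normal: "R0 G S \<lhd> G" by (rule normal_if_comm[OF R0_sub lc1_R0])

lemma Rs_sub: "subgroup (Rs G S) G"
proof -
  interpret N: normal "R0 G S" G by (rule R0_normal)
  interpret Q: comm_group "G Mod R0 G S" by (rule comm_quot[OF R0_sub lc1_R0])
  interpret ph: group_hom G "G Mod R0 G S" "\<lambda>a. R0 G S #> a"
    using N.r_coset_hom_Mod is_group Q.is_group by (simp add: group_hom_def group_hom_axioms_def)
  have mem: "g \<in> Rs G S \<longleftrightarrow> g \<in> carrier G \<and> (\<exists>n::nat. n > 0 \<and> (R0 G S #> g) [^]\<^bsub>G Mod R0 G S\<^esub> n = \<one>\<^bsub>G Mod R0 G S\<^esub>)" for g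
  proof -
    have "(R0 G S #> g) [^]\<^bsub>G Mod R0 G S\<^esub> n = \<one>\<^bsub>G Mod R0 G S\<^esub> \<longleftrightarrow> g [^] n \<in> R0 G S"
      if "g \<in> carrier G" for n :: nat
      using that ph.hom_nat_pow[of g n] rcos_one_iff[OF R0_sub, of "g [^] n"] by simp
    then show ?thesis unfolding Rs_def by auto
  qed
  show ?thesis
  proof
    show "Rs G S \<subseteq> carrier G" by (auto simp: Rs_def)
    show "\<one> \<in> Rs G S" unfolding Rs_def using subgroup.one_closed[OF R0_sub] by (auto intro!: exI[of _ 1])
  next
    fix g h assume g: "g \<in> Rs G S" and h: "h \<in> Rs G S"
    obtain n :: nat where n: "n > 0" "(R0 G S #> g) [^]\<^bsub>G Mod R0 G S\<^esub> n = \<one>\<^bsub>G Mod R0 G S\<^esub>" "g \<in> carrier G" using g mem by blast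
    obtain m :: nat where m: "m > 0" "(R0 G S #> h) [^]\<^bsub>G Mod R0 G S\<^esub> m = \<one>\<^bsub>G Mod R0 G S\<^esub>" "h \<in> carrier G" using h mem by blast
    have gC: "R0 G S #> g \<in> carrier (G Mod R0 G S)" and hC: "R0 G S #> h \<in> carrier (G Mod R0 G S)" using n m by auto
    have e1: "R0 G S #> (g \<otimes> h) = (R0 G S #> g) \<otimes>\<^bsub>G Mod R0 G S\<^esub> (R0 G S #> h)"
      by (rule ph.hom_mult) (use n m in auto)
    have "(R0 G S #> (g \<otimes> h)) [^]\<^bsub>G Mod R0 G S\<^esub> (n * m) = \<one>\<^bsub>G Mod R0 G S\<^esub>"
      unfolding e1 by (rule Q.pow_prod_one[OF gC hC n(2) m(2)])
    moreover have "n * m > 0" using n m by simp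
    moreover have "g \<otimes> h \<in> carrier G" using n m by simp
    ultimately show "g \<otimes> h \<in> Rs G S" unfolding mem by blast
  next
    fix g assume g: "g \<in> Rs G S"
    obtain n :: nat where n: "n > 0" "(R0 G S #> g) [^]\<^bsub>G Mod R0 G S\<^esub> n = \<one>\<^bsub>G Mod R0 G S\<^esub>" "g \<in> carrier G" using g mem by blast
    have "(R0 G S #> inv g) [^]\<^bsub>G Mod R0 G S\<^esub> n = inv\<^bsub>G Mod R0 G S\<^esub> ((R0 G S #> g) [^]\<^bsub>G Mod R0 G S\<^esub> n)"
      using n by (simp add: Q.nat_pow_inv)
    also have "\<dots> = inv\<^bsub>G Mod R0 G S\<^esub> \<one>\<^bsub>G Mod R0 G S\<^esub>" using n(2) by (simp only:)
    also have "\<dots> = \<one>\<^bsub>G Mod R0 G S\<^esub>" by (rule Q.inv_one)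
    moreover have "inv g \<in> carrier G" using n by simp
    ultimately show "inv g \<in> Rs G S" unfolding mem using n by blast
  qed
qed

lemma R0_Rs: "R0 G S \<subseteq> Rs G S"
  unfolding Rs_def using subgroup.mem_carrier[OF R0_sub] by (auto intro!: exI[of _ 1])

lemma Rs_normal: "Rs G S \<lhd> G"
  using normal_if_comm[OF Rs_sub] lc1_R0 R0_Rs by blast

lemma Rs_comm: "comm_group (G Mod Rs G S)"
  using comm_quot[OF Rs_sub] lc1_R0 R0_Rs by blast

lemma Rs_tf: "\<forall>x\<in>carrier (G Mod Rs G S). \<forall>n::nat. n > 0 \<longrightarrow> x [^]\<^bsub>G Mod Rs G S\<^esub> n = \<one>\<^bsub>G Mod Rs G S\<^esub> \<longrightarrow> x = \<one>\<^bsub>G Mod Rs G S\<^esub>"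
proof (intro ballI allI impI)
  interpret N: normal "Rs G S" G by (rule Rs_normal)
  fix x and n :: nat assume x: "x \<in> carrier (G Mod Rs G S)" and n: "n > 0"
    and e: "x [^]\<^bsub>G Mod Rs G S\<^esub> n = \<one>\<^bsub>G Mod Rs G S\<^esub>"
  obtain g where g: "g \<in> carrier G" and xg: "x = Rs G S #> g" using x by (auto simp: carrier_FactGroup)
  have "Rs G S #> (g [^] n) = x [^]\<^bsub>G Mod Rs G S\<^esub> n" unfolding xg by (rule N.FactGroup_pow[OF g, symmetric])
  also have "\<dots> = Rs G S" using e by (simp only: one_FactGroup)
  finally have "Rs G S #> (g [^] n) = Rs G S" .
  then have "g [^] n \<in> Rs G S" using rcos_one_iff[OF Rs_sub, of "g [^] n"] g by blast
  then obtain m :: nat where m: "m > 0" "(g [^] n) [^] m \<in> R0 G S" unfolding Rs_def by blast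
  have "g [^] (n * m) \<in> R0 G S" using m(2) g by (simp add: nat_pow_pow)
  moreover have "n * m > 0" using n m by simp
  ultimately have "g \<in> Rs G S" using g unfolding Rs_def by blast
  then have "Rs G S #> g = Rs G S" using rcos_one_iff[OF Rs_sub, of g] g by blast
  then show "x = \<one>\<^bsub>G Mod Rs G S\<^esub>" unfolding xg by (simp only: one_FactGroup)
qed

lemma Rs_fg:
  assumes F: "finite F" "F \<subseteq> carrier G" and gen: "generate G (F \<union> S) = carrier G"
  shows "generate (G Mod Rs G S) ((\<lambda>a. Rs G S #> a) ` F) = carrier (G Mod Rs G S)"
proof -
  interpret N: normal "Rs G S" G by (rule Rs_normal)
  interpret Q: group "G Mod Rs G S" by (rule N.factorgroup_is_group)
  interpret ph: group_hom G "G Mod Rs G S" "\<lambda>a. Rs G S #> a"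
    using N.r_coset_hom_Mod is_group Q.is_group by (simp add: group_hom_def group_hom_axioms_def)
  let ?p = "\<lambda>a. Rs G S #> a"
  have "carrier (G Mod Rs G S) = ?p ` generate G (F \<union> S)" using gen by (simp add: carrier_FactGroup)
  also have "\<dots> = generate (G Mod Rs G S) (?p ` (F \<union> S))"
    using ph.generate_img[of "F \<union> S"] F S by simp
  also have "\<dots> = generate (G Mod Rs G S) (?p ` F)"
  proof
    show "generate (G Mod Rs G S) (?p ` F) \<subseteq> generate (G Mod Rs G S) (?p ` (F \<union> S))"
      by (intro Q.mono_generate) auto
    have pS: "?p ` S \<subseteq> {\<one>\<^bsub>G Mod Rs G S\<^esub>}"
    proof
      fix q assume "q \<in> ?p ` S"
      then obtain a where a: "a \<in> S" "q = ?p a" by blast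
      have "a \<in> Rs G S" using a S_R0 R0_Rs by blast
      then have "?p a = Rs G S" using rcos_one_iff[OF Rs_sub, of a] a S by blast
      then show "q \<in> {\<one>\<^bsub>G Mod Rs G S\<^esub>}" using a by simp
    qed
    have "?p ` (F \<union> S) \<subseteq> generate (G Mod Rs G S) (?p ` F)"
    proof
      fix q assume "q \<in> ?p ` (F \<union> S)"
      then consider "q \<in> ?p ` F" | "q \<in> ?p ` S" by blast
      then show "q \<in> generate (G Mod Rs G S) (?p ` F)"
      proof cases
        case 1 then show ?thesis by (rule generate.incl)
      next
        case 2 then have "q = \<one>\<^bsub>G Mod Rs G S\<^esub>" using pS by blast
        then show ?thesis by (simp only: generate.one)
      qed
    qed
    then show "generate (G Mod Rs G S) (?p ` (F \<union> S)) \<subseteq> generate (G Mod Rs G S) (?p ` F)"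
      using F by (intro Q.generate_subgroup_incl Q.generate_is_subgroup) auto
  qed
  finally show ?thesis by simp
qed

lemma Rs_free:
  assumes F: "finite F" "F \<subseteq> carrier G" and gen: "generate G (F \<union> S) = carrier G"
  shows "\<exists>d::nat. G Mod Rs G S \<cong> free_Abelian_group {..<d}"
proof -
  interpret N: normal "Rs G S" G by (rule Rs_normal)
  interpret Q: comm_group "G Mod Rs G S" by (rule Rs_comm)
  have "finite ((\<lambda>a. Rs G S #> a) ` F)" using F by simp
  moreover have "(\<lambda>a. Rs G S #> a) ` F \<subseteq> carrier (G Mod Rs G S)" using F by (auto simp: carrier_FactGroup)
  ultimately show ?thesis using Q.fg_torsion_free_free[OF Rs_tf _ _ Rs_fg[OF F gen]] by blast
qed

end
end

context gsetting begin

lemma all_central: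
  assumes nil: "nilpotent_group G" and g: "g \<in> carrier G"
  shows "central lam g"
  unfolding central_def
proof
  interpret grp: group G by (rule grp)
  interpret ph: group_hom G "Q lam" "pr lam" by (rule pr_hom)
  fix a assume a: "a \<in> carrier G"
  have "a \<otimes>\<^bsub>G\<^esub> g \<otimes>\<^bsub>G\<^esub> inv\<^bsub>G\<^esub> a \<otimes>\<^bsub>G\<^esub> inv\<^bsub>G\<^esub> g \<in> lower_central G (Suc 0)"
    by (rule grp.comm_in_lc1[OF a g])
  then have "a \<otimes>\<^bsub>G\<^esub> g \<otimes>\<^bsub>G\<^esub> inv\<^bsub>G\<^esub> a \<otimes>\<^bsub>G\<^esub> inv\<^bsub>G\<^esub> g \<in> Kl lam"
    using lc1_K[OF nil, of lam] by (auto simp: One_nat_def)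
  then have "pr lam (a \<otimes>\<^bsub>G\<^esub> g \<otimes>\<^bsub>G\<^esub> inv\<^bsub>G\<^esub> a \<otimes>\<^bsub>G\<^esub> inv\<^bsub>G\<^esub> g) = Kl lam"
    using grp.rcos_one_iff[OF K_sub, of "a \<otimes>\<^bsub>G\<^esub> g \<otimes>\<^bsub>G\<^esub> inv\<^bsub>G\<^esub> a \<otimes>\<^bsub>G\<^esub> inv\<^bsub>G\<^esub> g"] a g by blast
  moreover have "pr lam (a \<otimes>\<^bsub>G\<^esub> g \<otimes>\<^bsub>G\<^esub> inv\<^bsub>G\<^esub> a \<otimes>\<^bsub>G\<^esub> inv\<^bsub>G\<^esub> g)
     = pr lam a \<otimes>\<^bsub>Q lam\<^esub> pr lam g \<otimes>\<^bsub>Q lam\<^esub> inv\<^bsub>Q lam\<^esub> pr lam a \<otimes>\<^bsub>Q lam\<^esub> inv\<^bsub>Q lam\<^esub> pr lam g"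
    using a g by (simp del: mult_FactGroup one_FactGroup)
  ultimately have "pr lam a \<otimes>\<^bsub>Q lam\<^esub> pr lam g \<otimes>\<^bsub>Q lam\<^esub> inv\<^bsub>Q lam\<^esub> pr lam a \<otimes>\<^bsub>Q lam\<^esub> inv\<^bsub>Q lam\<^esub> pr lam g = \<one>\<^bsub>Q lam\<^esub>"
    by (simp only: one_FactGroup)
  then show "pr lam a \<otimes>\<^bsub>Q lam\<^esub> pr lam g = pr lam g \<otimes>\<^bsub>Q lam\<^esub> pr lam a"
    using a g by (intro group.commutator_one[OF Q_group]) auto
qed

lemma stab_K:
  assumes nil: "nilpotent_group G" and s: "s \<in> stabilizer G \<phi> x0"
  shows "s \<in> Kl lam"
proof -
  have sC: "s \<in> carrier G" and fix0: "\<phi> s x0 = x0" using s by (auto simp: stabilizer_def)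
  show ?thesis
  proof (rule in_K[OF sC all_central[OF nil sC]])
    fix h \<alpha> assume h: "h \<in> Pl lam" and e: "T s h = (\<lambda>z. \<alpha> * h z)"
    have "T s h x0 = h (\<phi> (inv\<^bsub>G\<^esub> s) (\<phi> s x0))" using fix0 by (simp add: T_apply)
    also have "\<dots> = h x0" using sC by (simp add: phi_inv1)
    finally have "\<alpha> * h x0 = h x0" using e by simp
    then show "\<alpha> = 1" using Pl_pos[OF h, of x0] by simp
  qed
qed

lemma root_K:
  assumes nil: "nilpotent_group G" and g: "g \<in> carrier G" and n: "n > 0" and gn: "g [^]\<^bsub>G\<^esub> (n::nat) \<in> Kl lam"
  shows "g \<in> Kl lam"
proof (rule in_K[OF g all_central[OF nil g]])
  fix h \<alpha> assume h: "h \<in> Pl lam" and e: "T g h = (\<lambda>z. \<alpha> * h z)"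
  fix z
  have a0: "\<alpha> > 0" by (rule eig_pos[OF g h e])
  have "T (g [^]\<^bsub>G\<^esub> n) h = (\<lambda>z. \<alpha> ^ n * h z)" by (rule T_pow_eigen[OF g e])
  moreover have "T (g [^]\<^bsub>G\<^esub> n) h = h" using gn h by (simp add: Kl_def)
  ultimately have "\<alpha> ^ n * h z = h z" by metis
  then have "\<alpha> ^ n = 1 ^ n" using Pl_pos[OF h, of z] by simp
  then show "\<alpha> = 1" using a0 n by (intro power_eq_imp_eq_base[of \<alpha> n 1]) auto
qed

lemma Rs_K:
  assumes nil: "nilpotent_group G"
  shows "Rs G (\<Union>x. stabilizer G \<phi> x) \<subseteq> Kl lam"
proof -
  interpret grp: group G by (rule grp)
  have l1: "lower_central G (Suc 0) \<subseteq> Kl lam" using lc1_K[OF nil, of lam] by (simp only: One_nat_def)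
  have l2: "(\<Union>x. stabilizer G \<phi> x) \<subseteq> Kl lam" using stab_K[OF nil] by blast
  have R0K: "R0 G (\<Union>x. stabilizer G \<phi> x) \<subseteq> Kl lam"
    unfolding R0_def using l1 l2 by (intro grp.generate_subgroup_incl[OF _ K_sub]) (rule Un_least)
  show ?thesis
  proof
    fix g assume "g \<in> Rs G (\<Union>x. stabilizer G \<phi> x)"
    then obtain n :: nat where "g \<in> carrier G" "n > 0" "g [^]\<^bsub>G\<^esub> n \<in> R0 G (\<Union>x. stabilizer G \<phi> x)"
      unfolding Rs_def by blast
    then show "g \<in> Kl lam" using R0K root_K[OF nil] by blast
  qed
qed

end

context gsetting begin

lemma H_delta:
  assumes "x \<noteq> y"
  shows "H_op b c (\<lambda>z. if z = y then 1 else 0) x = - b x y"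
proof -
  have eq: "(\<lambda>z. b x z * (if z = y then 1 else 0)) = (\<lambda>z. if z = y then b x z else 0)" by auto
  have "(\<Sum>z\<in>nb x. b x z * (if z = y then 1 else 0)) = b x y"
    unfolding eq using fin_nb[of x] b_out[of y x] by (simp add: sum.delta)
  then show ?thesis using assms by (simp add: H_eq)
qed

lemma b_inv:
  assumes g: "g \<in> carrier G" and xy: "x \<noteq> y"
  shows "b (\<phi> g x) (\<phi> g y) = b x y"
proof -
  interpret grp: group G by (rule grp)
  define d where "d = (\<lambda>z. if z = y then 1 else (0::real))"
  have Td: "T g d = (\<lambda>z. if z = \<phi> g y then 1 else 0)"
  proof
    fix z
    have "(\<phi> (inv\<^bsub>G\<^esub> g) z = y) \<longleftrightarrow> (z = \<phi> g y)"
      using g phi_inv1 phi_inv2 by metis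
    then show "T g d z = (if z = \<phi> g y then 1 else 0)" by (simp add: T_apply d_def)
  qed
  have "H_op b c (T g d) = T g (H_op b c d)" using ginv g dom_all by (auto simp: G_invariant_def)
  then have "H_op b c (T g d) (\<phi> g x) = H_op b c d (\<phi> (inv\<^bsub>G\<^esub> g) (\<phi> g x))" by (simp add: T_apply)
  also have "\<dots> = H_op b c d x" using g by (simp add: phi_inv1)
  also have "\<dots> = - b x y" unfolding d_def by (rule H_delta[OF xy])
  finally have e: "H_op b c (T g d) (\<phi> g x) = - b x y" .
  have "\<phi> g x \<noteq> \<phi> g y" using xy g phi_inv1 by metis
  then have "H_op b c (T g d) (\<phi> g x) = - b (\<phi> g x) (\<phi> g y)" unfolding Td by (rule H_delta)
  then show ?thesis using e by simp
qed

lemma fin_gen: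
  "\<exists>F. finite F \<and> F \<subseteq> carrier G \<and> generate G (F \<union> (\<Union>x. stabilizer G \<phi> x)) = carrier G"
proof -
  interpret grp: group G by (rule grp)
  let ?S = "\<Union>x. stabilizer G \<phi> x"
  obtain V where V: "finite V" "(\<Union>g\<in>carrier G. \<phi> g ` V) = UNIV" using cc by (auto simp: cocompact_def)
  have "\<forall>u. \<exists>g w. g \<in> carrier G \<and> w \<in> V \<and> u = \<phi> g w" using V(2) by blast
  then obtain fg fw where fgw: "\<And>u. fg u \<in> carrier G" "\<And>u. fw u \<in> V" "\<And>u. u = \<phi> (fg u) (fw u)" by metis
  obtain v0 where v0: "v0 \<in> V" using V(2) by blast
  have "\<forall>w. \<exists>t. (w \<in> V \<and> (\<exists>t\<in>carrier G. \<phi> t v0 = w)) \<longrightarrow> t \<in> carrier G \<and> \<phi> t v0 = w" by blast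
  then obtain tt where tt: "\<And>w. w \<in> V \<Longrightarrow> (\<exists>t\<in>carrier G. \<phi> t v0 = w) \<Longrightarrow> tt w \<in> carrier G \<and> \<phi> (tt w) v0 = w"
    by metis
  define F where "F = fg ` (\<Union>w\<in>V. nb w) \<union> tt ` {w \<in> V. \<exists>t\<in>carrier G. \<phi> t v0 = w}"
  have finF: "finite F" unfolding F_def using V(1) fin_nb by auto
  have FC: "F \<subseteq> carrier G"
  proof
    fix f assume "f \<in> F"
    then consider u where "f = fg u" | w where "w \<in> V" "\<exists>t\<in>carrier G. \<phi> t v0 = w" "f = tt w"
      unfolding F_def by blast
    then show "f \<in> carrier G"
    proof cases
      case 1 then show ?thesis using fgw(1) by simp
    next
      case 2 then show ?thesis using tt[OF 2(1,2)] by simp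
    qed
  qed
  have SC: "?S \<subseteq> carrier G" by (auto simp: stabilizer_def)
  define \<Gamma> where "\<Gamma> = generate G (F \<union> ?S)"
  have sg: "subgroup \<Gamma> G" unfolding \<Gamma>_def using FC SC by (intro grp.generate_is_subgroup) auto
  have inF: "f \<in> F \<Longrightarrow> f \<in> \<Gamma>" for f unfolding \<Gamma>_def by (auto intro: generate.incl)
  have inS: "s \<in> ?S \<Longrightarrow> s \<in> \<Gamma>" for s unfolding \<Gamma>_def by (auto intro: generate.incl)
  have reach: "\<exists>\<gamma>\<in>\<Gamma>. \<exists>w\<in>V. p = \<phi> \<gamma> w" if "(\<lambda>u v. 0 < b u v)\<^sup>*\<^sup>* v0 p" for p
    using that
  proof (induction rule: rtranclp_induct)
    case base
    then show ?case using v0 subgroup.one_closed[OF sg] by (intro bexI[of _ "\<one>\<^bsub>G\<^esub>"]) (auto simp: phi_one)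
  next
    case (step p q)
    then obtain \<gamma> w where gw: "\<gamma> \<in> \<Gamma>" "w \<in> V" "p = \<phi> \<gamma> w" by blast
    show ?case
    proof (cases "q = p")
      case True
      have "q = \<phi> \<gamma> w" using True gw(3) by simp
      then show ?thesis using gw(1,2) by blast
    next
      case False
      have \<gamma>C: "\<gamma> \<in> carrier G" by (rule subgroup.mem_carrier[OF sg gw(1)])
      define u where "u = \<phi> (inv\<^bsub>G\<^esub> \<gamma>) q"
      have "b w u = b (\<phi> (inv\<^bsub>G\<^esub> \<gamma>) p) (\<phi> (inv\<^bsub>G\<^esub> \<gamma>) q)" using gw \<gamma>C by (simp add: u_def phi_inv1)
      also have "\<dots> = b p q" using False \<gamma>C by (intro b_inv) auto
      finally have "u \<in> nb w" using step(2) by (simp add: nb_def)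
      then have "fg u \<in> F" unfolding F_def using gw(2) by blast
      then have "\<gamma> \<otimes>\<^bsub>G\<^esub> fg u \<in> \<Gamma>" by (rule subgroup.m_closed[OF sg gw(1) inF])
      moreover have "q = \<phi> (\<gamma> \<otimes>\<^bsub>G\<^esub> fg u) (fw u)"
      proof -
        have "q = \<phi> \<gamma> u" using \<gamma>C by (simp add: u_def phi_inv2)
        also have "\<dots> = \<phi> \<gamma> (\<phi> (fg u) (fw u))" using fgw(3)[of u] by (rule arg_cong)
        also have "\<dots> = \<phi> (\<gamma> \<otimes>\<^bsub>G\<^esub> fg u) (fw u)" using \<gamma>C fgw(1) by (simp add: phi_mult)
        finally show ?thesis .
      qed
      ultimately show ?thesis using fgw(2) by blast
    qed
  qed
  have "carrier G \<subseteq> \<Gamma>"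
  proof
    fix g assume g: "g \<in> carrier G"
    have "(\<lambda>u v. 0 < b u v)\<^sup>*\<^sup>* v0 (\<phi> g v0)" using conn by (simp add: graph_connected_def)
    then obtain \<gamma> w where gw: "\<gamma> \<in> \<Gamma>" "w \<in> V" "\<phi> g v0 = \<phi> \<gamma> w" using reach by blast
    have \<gamma>C: "\<gamma> \<in> carrier G" by (rule subgroup.mem_carrier[OF sg gw(1)])
    have "\<phi> (inv\<^bsub>G\<^esub> \<gamma> \<otimes>\<^bsub>G\<^esub> g) v0 = w" using gw \<gamma>C g by (simp add: phi_mult phi_inv1)
    then have "\<exists>t\<in>carrier G. \<phi> t v0 = w" using \<gamma>C g by (intro bexI[of _ "inv\<^bsub>G\<^esub> \<gamma> \<otimes>\<^bsub>G\<^esub> g"]) auto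
    then have t: "tt w \<in> carrier G" "\<phi> (tt w) v0 = w" using tt[OF gw(2)] by auto
    have "tt w \<in> F" unfolding F_def using gw(2) \<open>\<exists>t\<in>carrier G. \<phi> t v0 = w\<close> by blast
    then have e\<Gamma>: "\<gamma> \<otimes>\<^bsub>G\<^esub> tt w \<in> \<Gamma>" by (rule subgroup.m_closed[OF sg gw(1) inF])
    define e where "e = \<gamma> \<otimes>\<^bsub>G\<^esub> tt w"
    have eC: "e \<in> carrier G" using \<gamma>C t by (simp add: e_def)
    have "\<phi> e v0 = \<phi> g v0" using gw t \<gamma>C by (simp add: e_def phi_mult)
    then have "\<phi> (inv\<^bsub>G\<^esub> e \<otimes>\<^bsub>G\<^esub> g) v0 = v0" using eC g by (metis phi_mult phi_inv1 grp.inv_closed)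
    then have "inv\<^bsub>G\<^esub> e \<otimes>\<^bsub>G\<^esub> g \<in> ?S" using eC g by (auto simp: stabilizer_def)
    then have "inv\<^bsub>G\<^esub> e \<otimes>\<^bsub>G\<^esub> g \<in> \<Gamma>" by (rule inS)
    then have "e \<otimes>\<^bsub>G\<^esub> (inv\<^bsub>G\<^esub> e \<otimes>\<^bsub>G\<^esub> g) \<in> \<Gamma>" unfolding e_def by (rule subgroup.m_closed[OF sg e\<Gamma>])
    then show "g \<in> \<Gamma>" using eC g by (simp add: grp.m_assoc[symmetric])
  qed
  moreover have "\<Gamma> \<subseteq> carrier G" by (rule subgroup.subset[OF sg])
  ultimately show ?thesis using finF FC unfolding \<Gamma>_def by blast
qed

end

theorem lemma11:
  fixes G :: "'g monoid" and \<phi> :: "'g \<Rightarrow> 'x \<Rightarrow> 'x"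
    and b :: "'x \<Rightarrow> 'x \<Rightarrow> real" and c :: "'x \<Rightarrow> real"
  assumes "countable (UNIV :: 'x set)"
    and "graph b c" and "locally_finite b" and "graph_connected b"
    and "nilpotent_group G"
    and "group_action G UNIV \<phi>"
    and "cocompact G \<phi>"
    and "G_invariant G \<phi> b c"
  shows "\<exists>R. R \<lhd> G
           \<and> (\<forall>f\<in>pos_eigenfunctions b c. R_invariant G \<phi> R f)
           \<and> (\<exists>d::nat. G Mod R \<cong> free_Abelian_group {..<d})
           \<and> (\<forall>x. stabilizer G \<phi> x \<subseteq> R)"
proof -
  note a = assms
  have bnn: "\<And>x y. 0 \<le> b x y" using a(2) by (simp add: graph_def)
  interpret gs: gsetting G \<phi> b c
    by (rule gsetting.intro[OF a(6) a(3) bnn a(4) a(7) a(8) a(1)])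
  interpret grp: group G by (rule gs.grp)
  define S where "S = (\<Union>x. stabilizer G \<phi> x)"
  have SC: "S \<subseteq> carrier G" by (auto simp: S_def stabilizer_def)
  define R where "R = Rs G S"
  have "R \<lhd> G" unfolding R_def by (rule grp.Rs_normal[OF SC])
  moreover have "\<forall>f\<in>pos_eigenfunctions b c. R_invariant G \<phi> R f"
  proof
    fix f assume "f \<in> pos_eigenfunctions b c"
    then obtain lam where f: "f \<in> gs.Pl lam" using gs.pos_eig by blast
    have "R \<subseteq> gs.Kl lam" unfolding R_def S_def by (rule gs.Rs_K[OF a(5)])
    then show "R_invariant G \<phi> R f" using f by (auto simp: R_invariant_def gs.Kl_def)
  qed
  moreover have "\<exists>d::nat. G Mod R \<cong> free_Abelian_group {..<d}"
  proof -
    obtain F where F: "finite F" "F \<subseteq> carrier G" "generate G (F \<union> S) = carrier G"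
      using gs.fin_gen unfolding S_def by blast
    show ?thesis unfolding R_def by (rule grp.Rs_free[OF SC F])
  qed
  moreover have "\<forall>x. stabilizer G \<phi> x \<subseteq> R"
    using grp.S_R0[OF SC] grp.R0_Rs[OF SC] unfolding R_def S_def by blast
  ultimately show ?thesis by blast
qed


end
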